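(* Let $(k,|\cdot|)$ be a complete non-Archimedean field of characteristic $p>0$ with nontrivial value group. For every $n>0$ the convergent power series ring $K_n(k)$ is Frobenius split in each of the following cases: (i) $(k,|\cdot|)$ is spherically complete; (ii) $k^{1/p}$ has a dense $k$-subspace having a countable $k$-basis (in particular if $[k^{1/p}:k]<\infty$); (iii) $|k^\times|$ is not discrete and the norm on $k^{1/p}$ is polar.
   Context: $K_n(k)$ is the subring of $k[[X_1,\dots,X_n]]$ of series $\sum_\nu a_\nu X^\nu$ for which there exist $r_1,\dots,r_n,M>0$ with $|a_\nu|r_1^{\nu_1}\cdots r_n^{\nu_n}\le M$ for all $\nu$. A ring $R$ of characteristic $p$ is Frobenius split if there is an $R$-linear $\phi\colon F_{R*}R\to R$ with $\phi(1)=1$, where $F_{R*}R$ is $R$ with $r\cdot x=r^px$. $k$ is spherically complete if every decreasing sequence of closed disks in $k$ has nonempty intersection. $k^{1/p}$ carries the unique absolute value extending that of $k$. A norm $\|\cdot\|$ on a normed $k$-space $E$ is polar if for every $x$ with $\|x\|>1$ there is a linear functional $f\colon E\to k$ with $|f(y)|\le 1$ whenever $\|y\|\le1$ and $|f(x)|>1$. *)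

theory Defs
  imports Complex_Main "HOL-Library.Countable_Set"
begin

definition nonarch_abs :: "('a::field \<Rightarrow> real) \<Rightarrow> bool" where
  "nonarch_abs v \<longleftrightarrow>
     (\<forall>x. 0 \<le> v x) \<and> (\<forall>x. v x = 0 \<longleftrightarrow> x = 0) \<and>
     (\<forall>x y. v (x * y) = v x * v y) \<and>
     (\<forall>x y. v (x + y) \<le> max (v x) (v y))"

definition abs_complete :: "('a::field \<Rightarrow> real) \<Rightarrow> bool" where
  "abs_complete v \<longleftrightarrow>
     (\<forall>s::nat \<Rightarrow> 'a.
        (\<forall>e>0. \<exists>N. \<forall>m\<ge>N. \<forall>n\<ge>N. v (s m - s n) < e) \<longrightarrow>
        (\<exists>l. \<forall>e>0. \<exists>N. \<forall>n\<ge>N. v (s n - l) < e))"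

definition nontrivial_value_group :: "('a::field \<Rightarrow> real) \<Rightarrow> bool" where
  "nontrivial_value_group v \<longleftrightarrow> (\<exists>x. x \<noteq> 0 \<and> v x \<noteq> 1)"

text \<open>The value group \<open>|k^\<times>|\<close> (a subgroup of the positive reals) is discrete
  iff 1 is an isolated point of it.\<close>
definition discrete_value_group :: "('a::field \<Rightarrow> real) \<Rightarrow> bool" where
  "discrete_value_group v \<longleftrightarrow>
     (\<exists>e>0. \<forall>x. x \<noteq> 0 \<and> v x \<noteq> 1 \<longrightarrow> \<bar>v x - 1\<bar> \<ge> e)"

definition closed_disk :: "('a::field \<Rightarrow> real) \<Rightarrow> 'a \<Rightarrow> real \<Rightarrow> 'a set" where
  "closed_disk v c r = {x. v (x - c) \<le> r}"

definition spherically_complete :: "('a::field \<Rightarrow> real) \<Rightarrow> bool" where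
  "spherically_complete v \<longleftrightarrow>
     (\<forall>(c::nat \<Rightarrow> 'a) (r::nat \<Rightarrow> real).
        (\<forall>n. r n > 0) \<and>
        (\<forall>n. closed_disk v (c (Suc n)) (r (Suc n)) \<subseteq> closed_disk v (c n) (r n)) \<longrightarrow>
        (\<Inter>n. closed_disk v (c n) (r n)) \<noteq> {})"

text \<open>\<open>k^{1/p}\<close> is identified with \<open>k\<close> via the field isomorphism
  \<open>k^{1/p} \<rightarrow> k, y \<mapsto> y^p\<close>.  Transported along it, the inclusion \<open>k \<subseteq> k^{1/p}\<close>
  becomes the scalar action \<open>a \<cdot> x = a^p x\<close>, and the unique extension of the
  absolute value, \<open>|y| = |y^p|^{1/p}\<close>, becomes \<open>\<parallel>x\<parallel> = |x|^{1/p}\<close>.\<close>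

definition rp_smul :: "nat \<Rightarrow> 'a::field \<Rightarrow> 'a \<Rightarrow> 'a" where
  "rp_smul p a x = a ^ p * x"

definition rp_norm :: "('a::field \<Rightarrow> real) \<Rightarrow> nat \<Rightarrow> 'a \<Rightarrow> real" where
  "rp_norm v p x = v x powr (1 / real p)"

definition rp_subspace :: "nat \<Rightarrow> 'a::field set \<Rightarrow> bool" where
  "rp_subspace p V \<longleftrightarrow> 0 \<in> V \<and> (\<forall>x\<in>V. \<forall>y\<in>V. x + y \<in> V) \<and>
     (\<forall>a. \<forall>x\<in>V. rp_smul p a x \<in> V)"

definition rp_dense :: "('a::field \<Rightarrow> real) \<Rightarrow> nat \<Rightarrow> 'a set \<Rightarrow> bool" where
  "rp_dense v p V \<longleftrightarrow> (\<forall>x. \<forall>e>0. \<exists>y\<in>V. rp_norm v p (x - y) < e)"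

definition rp_basis :: "nat \<Rightarrow> 'a::field set \<Rightarrow> 'a set \<Rightarrow> bool" where
  "rp_basis p V B \<longleftrightarrow> B \<subseteq> V \<and>
     (\<forall>S c. finite S \<and> S \<subseteq> B \<and> (\<Sum>b\<in>S. rp_smul p (c b) b) = 0 \<longrightarrow> (\<forall>b\<in>S. c b = 0)) \<and>
     (\<forall>x\<in>V. \<exists>S c. finite S \<and> S \<subseteq> B \<and> x = (\<Sum>b\<in>S. rp_smul p (c b) b))"

definition rp_dense_countable_basis :: "('a::field \<Rightarrow> real) \<Rightarrow> nat \<Rightarrow> bool" where
  "rp_dense_countable_basis v p \<longleftrightarrow>
     (\<exists>V B. rp_subspace p V \<and> rp_dense v p V \<and> rp_basis p V B \<and> countable B)"

definition rp_polar :: "('a::field \<Rightarrow> real) \<Rightarrow> nat \<Rightarrow> bool" where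
  "rp_polar v p \<longleftrightarrow>
     (\<forall>x. rp_norm v p x > 1 \<longrightarrow>
        (\<exists>f::'a \<Rightarrow> 'a.
           (\<forall>y z. f (y + z) = f y + f z) \<and> (\<forall>a y. f (rp_smul p a y) = a * f y) \<and>
           (\<forall>y. rp_norm v p y \<le> 1 \<longrightarrow> v (f y) \<le> 1) \<and> v (f x) > 1))"

type_synonym ('n, 'a) mps = "('n \<Rightarrow> nat) \<Rightarrow> 'a"

definition mps_add :: "('n, 'a::field) mps \<Rightarrow> ('n, 'a) mps \<Rightarrow> ('n, 'a) mps" where
  "mps_add a b = (\<lambda>\<nu>. a \<nu> + b \<nu>)"

definition mps_mult :: "('n::finite, 'a::field) mps \<Rightarrow> ('n, 'a) mps \<Rightarrow> ('n, 'a) mps" where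
  "mps_mult a b = (\<lambda>\<nu>. \<Sum>\<mu>\<in>{\<mu>. \<forall>i. \<mu> i \<le> \<nu> i}. a \<mu> * b (\<lambda>i. \<nu> i - \<mu> i))"

definition mps_one :: "('n, 'a::field) mps" where
  "mps_one = (\<lambda>\<nu>. if \<nu> = (\<lambda>_. 0) then 1 else 0)"

definition mps_pow :: "('n::finite, 'a::field) mps \<Rightarrow> nat \<Rightarrow> ('n, 'a) mps" where
  "mps_pow a m = ((mps_mult a) ^^ m) mps_one"

definition conv_ps :: "('a::field \<Rightarrow> real) \<Rightarrow> ('n::finite, 'a) mps set" where
  "conv_ps v = {a. \<exists>(r::'n \<Rightarrow> real) (M::real). (\<forall>i. r i > 0) \<and> M > 0 \<and>
                   (\<forall>\<nu>. v (a \<nu>) * (\<Prod>i\<in>UNIV. r i ^ \<nu> i) \<le> M)}"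

text \<open>Frobenius splitting of the ring \<open>K_n(k)\<close>: an additive map \<open>\<phi> : R \<rightarrow> R\<close> with
  \<open>\<phi>(r^p x) = r \<phi>(x)\<close> (i.e. \<open>R\<close>-linear \<open>F_*R \<rightarrow> R\<close>) and \<open>\<phi>(1) = 1\<close>.\<close>
definition conv_ps_frobenius_split :: "('a::field \<Rightarrow> real) \<Rightarrow> nat \<Rightarrow> 'n::finite itself \<Rightarrow> bool" where
  "conv_ps_frobenius_split v p _ \<longleftrightarrow>
     (\<exists>\<phi> :: ('n, 'a) mps \<Rightarrow> ('n, 'a) mps.
        (\<forall>x\<in>conv_ps v. \<phi> x \<in> conv_ps v) \<and>
        (\<forall>x\<in>conv_ps v. \<forall>y\<in>conv_ps v. \<phi> (mps_add x y) = mps_add (\<phi> x) (\<phi> y)) \<and>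
        (\<forall>r\<in>conv_ps v. \<forall>x\<in>conv_ps v. \<phi> (mps_mult (mps_pow r p) x) = mps_mult r (\<phi> x)) \<and>
        \<phi> mps_one = mps_one)"

end

theory Submission
  imports Defs "HOL-Computational_Algebra.Primes"
begin


definition Sle :: "('n::finite \<Rightarrow> nat) \<Rightarrow> ('n \<Rightarrow> nat) set" where
  "Sle \<nu> = {\<mu>. \<forall>i. \<mu> i \<le> \<nu> i}"

lemma finite_Sle[simp]: "finite (Sle (\<nu>::'n::finite \<Rightarrow> nat))"
proof -
  have "Sle \<nu> \<subseteq> {f. \<forall>x. (x \<in> UNIV \<longrightarrow> f x \<in> {..Max (range \<nu>)}) \<and> (x \<notin> UNIV \<longrightarrow> f x = 0)}"
  proof
    fix f assume "f \<in> Sle \<nu>"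
    then have "\<forall>i. f i \<le> \<nu> i" by (simp add: Sle_def)
    moreover have "\<And>i. \<nu> i \<le> Max (range \<nu>)" by (rule Max_ge) auto
    ultimately have "\<forall>i. f i \<le> Max (range \<nu>)" using le_trans by blast
    then show "f \<in> {f. \<forall>x. (x \<in> UNIV \<longrightarrow> f x \<in> {..Max (range \<nu>)}) \<and> (x \<notin> UNIV \<longrightarrow> f x = 0)}" by simp
  qed
  moreover have "finite {f. \<forall>x. (x \<in> (UNIV::'n set) \<longrightarrow> f x \<in> {..Max (range \<nu>)}) \<and> (x \<notin> UNIV \<longrightarrow> f x = (0::nat))}"
    by (rule finite_set_of_finite_funs) auto
  ultimately show ?thesis by (rule finite_subset)
qed

lemma mps_mult_Sle: "mps_mult a b \<nu> = (\<Sum>\<mu>\<in>Sle \<nu>. a \<mu> * b (\<lambda>i. \<nu> i - \<mu> i))"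
  unfolding mps_mult_def Sle_def by simp



lemma Sle_flip: "(\<lambda>i. \<nu> i - \<mu> i) \<in> Sle \<nu>" by (simp add: Sle_def)
lemma flip_flip: "\<mu> \<in> Sle \<nu> \<Longrightarrow> (\<lambda>i. \<nu> i - (\<nu> i - \<mu> i)) = \<mu>"
  by (simp add: Sle_def fun_eq_iff)
lemma mps_mult_comm: "mps_mult a b = mps_mult (b::('n::finite,'a::field) mps) a"
proof
  fix \<nu>
  show "mps_mult a b \<nu> = mps_mult b a \<nu>"
    unfolding mps_mult_Sle
    by (rule sum.reindex_bij_witness[where i="\<lambda>\<mu> i. \<nu> i - \<mu> i" and j="\<lambda>\<mu> i. \<nu> i - \<mu> i"])
      (simp_all add: Sle_flip flip_flip mult.commute)
qed

lemma mps_mult_assoc: "mps_mult (mps_mult a b) c = mps_mult a (mps_mult b (c::('n::finite,'a::field) mps))"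
proof
  fix \<nu>
  have "mps_mult (mps_mult a b) c \<nu> =
     (\<Sum>\<mu>\<in>Sle \<nu>. \<Sum>l\<in>{l. l \<in> Sle \<nu> \<and> (\<forall>i. l i \<le> \<mu> i)}. a l * b (\<lambda>i. \<mu> i - l i) * c (\<lambda>i. \<nu> i - \<mu> i))"
    unfolding mps_mult_Sle sum_distrib_right
  proof (rule sum.cong[OF refl])
    fix \<mu> assume m: "\<mu> \<in> Sle \<nu>"
    have "Sle \<mu> = {l. l \<in> Sle \<nu> \<and> (\<forall>i. l i \<le> \<mu> i)}"
      using m unfolding Sle_def by (auto intro: order_trans)
    then show "(\<Sum>l\<in>Sle \<mu>. a l * b (\<lambda>i. \<mu> i - l i) * c (\<lambda>i. \<nu> i - \<mu> i)) =
       (\<Sum>l\<in>{l. l \<in> Sle \<nu> \<and> (\<forall>i. l i \<le> \<mu> i)}. a l * b (\<lambda>i. \<mu> i - l i) * c (\<lambda>i. \<nu> i - \<mu> i))"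
      by simp
  qed
  also have "\<dots> = (\<Sum>l\<in>Sle \<nu>. \<Sum>\<mu>\<in>{\<mu>. \<mu> \<in> Sle \<nu> \<and> (\<forall>i. l i \<le> \<mu> i)}. a l * b (\<lambda>i. \<mu> i - l i) * c (\<lambda>i. \<nu> i - \<mu> i))"
    by (rule sum.swap_restrict) simp_all
  also have "\<dots> = mps_mult a (mps_mult b c) \<nu>"
    unfolding mps_mult_Sle sum_distrib_left
  proof (rule sum.cong[OF refl])
    fix l assume l: "l \<in> Sle \<nu>"
    have A: "\<And>\<kappa>. \<kappa> \<in> Sle (\<lambda>i. \<nu> i - l i) \<Longrightarrow> (\<lambda>i. l i + \<kappa> i - l i) = \<kappa>" by (simp add: fun_eq_iff)
    have B: "\<And>\<kappa>. \<kappa> \<in> Sle (\<lambda>i. \<nu> i - l i) \<Longrightarrow> (\<lambda>i. l i + \<kappa> i) \<in> {\<mu>. \<mu> \<in> Sle \<nu> \<and> (\<forall>i. l i \<le> \<mu> i)}"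
      using l by (simp add: Sle_def le_diff_conv2 add.commute)
    have C: "\<And>\<mu>. \<mu> \<in> {\<mu>. \<mu> \<in> Sle \<nu> \<and> (\<forall>i. l i \<le> \<mu> i)} \<Longrightarrow> (\<lambda>i. l i + (\<mu> i - l i)) = \<mu>"
      by (simp add: fun_eq_iff)
    have D: "\<And>\<mu>. \<mu> \<in> {\<mu>. \<mu> \<in> Sle \<nu> \<and> (\<forall>i. l i \<le> \<mu> i)} \<Longrightarrow> (\<lambda>i. \<mu> i - l i) \<in> Sle (\<lambda>i. \<nu> i - l i)"
      by (simp add: Sle_def diff_le_mono)
    have E: "\<And>\<mu>. \<mu> \<in> {\<mu>. \<mu> \<in> Sle \<nu> \<and> (\<forall>i. l i \<le> \<mu> i)} \<Longrightarrow> (\<lambda>i. \<nu> i - l i - (\<mu> i - l i)) = (\<lambda>i. \<nu> i - \<mu> i)"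
      by (simp add: fun_eq_iff)
    show "(\<Sum>\<mu>\<in>{\<mu>. \<mu> \<in> Sle \<nu> \<and> (\<forall>i. l i \<le> \<mu> i)}. a l * b (\<lambda>i. \<mu> i - l i) * c (\<lambda>i. \<nu> i - \<mu> i)) =
          (\<Sum>\<kappa>\<in>Sle (\<lambda>i. \<nu> i - l i). a l * (b \<kappa> * c (\<lambda>i. \<nu> i - l i - \<kappa> i)))"
      by (rule sum.reindex_bij_witness[where i="\<lambda>\<kappa> i. l i + \<kappa> i" and j="\<lambda>\<mu> i. \<mu> i - l i"])
        (simp_all only: A B C D E mult.assoc)
  qed
  finally show "mps_mult (mps_mult a b) c \<nu> = mps_mult a (mps_mult b c) \<nu>" .
qed

lemma mps_mult_distrib: "mps_mult a (mps_add b c) = mps_add (mps_mult a b) (mps_mult a (c::('n::finite,'a::field) mps))"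
  unfolding mps_add_def mps_mult_def by (simp add: fun_eq_iff distrib_left sum.distrib)

lemma mps_mult_one: "mps_mult mps_one a = (a::('n::finite,'a::field) mps)"
proof
  fix \<nu>
  have "mps_mult mps_one a \<nu> = (\<Sum>\<mu>\<in>{\<lambda>_. 0}. mps_one \<mu> * a (\<lambda>i. \<nu> i - \<mu> i))"
    unfolding mps_mult_Sle by (rule sum.mono_neutral_right) (simp, simp_all add: Sle_def mps_one_def)
  then show "mps_mult mps_one a \<nu> = a \<nu>" by (simp add: mps_one_def)
qed


typedef ('n::finite, 'a::field) PS = "UNIV :: (('n \<Rightarrow> nat) \<Rightarrow> 'a) set" by simp

setup_lifting type_definition_PS

instantiation PS :: (finite, field) comm_ring_1
begin
lift_definition zero_PS :: "('a,'b) PS" is "\<lambda>_. 0" .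
lift_definition one_PS :: "('a,'b) PS" is mps_one .
lift_definition plus_PS :: "('a,'b) PS \<Rightarrow> ('a,'b) PS \<Rightarrow> ('a,'b) PS" is mps_add .
lift_definition times_PS :: "('a,'b) PS \<Rightarrow> ('a,'b) PS \<Rightarrow> ('a,'b) PS" is mps_mult .
lift_definition uminus_PS :: "('a,'b) PS \<Rightarrow> ('a,'b) PS" is "\<lambda>a \<nu>. - a \<nu>" .
lift_definition minus_PS :: "('a,'b) PS \<Rightarrow> ('a,'b) PS \<Rightarrow> ('a,'b) PS" is "\<lambda>a b \<nu>. a \<nu> - b \<nu>" .
instance
proof
  fix a b c :: "('a,'b) PS"
  show "a * b * c = a * (b * c)" by transfer (rule mps_mult_assoc)
  show "a * b = b * a" by transfer (rule mps_mult_comm)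
  show "1 * a = a" by transfer (rule mps_mult_one)
  show "a + b + c = a + (b + c)" by transfer (simp add: mps_add_def add.assoc)
  show "a + b = b + a" by transfer (simp add: mps_add_def add.commute)
  show "0 + a = a" by transfer (simp add: mps_add_def)
  show "- a + a = 0" by transfer (simp add: mps_add_def)
  show "a - b = a + - b" by transfer (simp add: mps_add_def)
  show "(a + b) * c = a * c + b * c" by transfer (metis mps_mult_comm mps_mult_distrib)
  show "(0::('a,'b) PS) \<noteq> 1"
  proof
    assume "(0::('a,'b) PS) = 1"
    then have "Rep_PS (0::('a,'b) PS) (\<lambda>_. 0) = Rep_PS (1::('a,'b) PS) (\<lambda>_. 0)" by simp
    then show False by (simp add: zero_PS.rep_eq one_PS.rep_eq mps_one_def)
  qed
qed
end

lemma mps_pow_Rep: "mps_pow r m = Rep_PS (Abs_PS r ^ m)"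
proof (induction m)
  case 0 then show ?case by (simp add: mps_pow_def one_PS.rep_eq)
next
  case (Suc m)
  have "mps_pow r (Suc m) = mps_mult r (mps_pow r m)" by (simp add: mps_pow_def)
  then show ?case using Suc by (simp add: times_PS.rep_eq Abs_PS_inverse)
qed

lemma of_nat_PS: "Rep_PS (of_nat n :: ('n::finite,'a::field) PS) = (\<lambda>\<nu>. if \<nu> = (\<lambda>_. 0) then of_nat n else 0)"
proof (induction n)
  case 0 then show ?case by (simp add: zero_PS.rep_eq fun_eq_iff)
next
  case (Suc n) then show ?case
    by (simp add: plus_PS.rep_eq one_PS.rep_eq mps_add_def mps_one_def fun_eq_iff)
qed

lemma CHAR_PS: "CHAR(('n::finite,'a::field) PS) = CHAR('a)"
proof (rule CHAR_eqI)
  show "of_nat CHAR('a) = (0::('n,'a) PS)"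
    by (simp add: Rep_PS_inject[symmetric] of_nat_PS zero_PS.rep_eq fun_eq_iff)
next
  fix x assume "of_nat x = (0::('n,'a) PS)"
  then have "Rep_PS (of_nat x :: ('n,'a) PS) (\<lambda>_. 0) = Rep_PS (0::('n,'a) PS) (\<lambda>_. 0)" by simp
  then have "of_nat x = (0::'a)" by (simp add: of_nat_PS zero_PS.rep_eq)
  then show "CHAR('a) dvd x" by (simp add: of_nat_eq_0_iff_char_dvd)
qed

lemma Rep_sum: "Rep_PS (sum f A) \<kappa> = (\<Sum>x\<in>A. Rep_PS (f x) \<kappa>)"
  by (induction A rule: infinite_finite_induct) (simp_all add: zero_PS.rep_eq plus_PS.rep_eq mps_add_def)

definition monom :: "'a::field \<Rightarrow> ('n::finite \<Rightarrow> nat) \<Rightarrow> ('n, 'a) mps" where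
  "monom c \<mu> = (\<lambda>\<nu>. if \<nu> = \<mu> then c else 0)"

lemma monom_mult: "mps_mult (monom c \<mu>) (monom d l) = monom (c * d) (\<lambda>i. \<mu> i + l i)"
proof
  fix \<nu>
  have "mps_mult (monom c \<mu>) (monom d l) \<nu> =
        (\<Sum>\<kappa>\<in>Sle \<nu>. if \<kappa> = \<mu> then c * monom d l (\<lambda>i. \<nu> i - \<mu> i) else 0)"
    unfolding mps_mult_Sle by (rule sum.cong) (auto simp: monom_def)
  also have "\<dots> = (if \<mu> \<in> Sle \<nu> then c * monom d l (\<lambda>i. \<nu> i - \<mu> i) else 0)"
    by (simp add: sum.delta')
  also have "\<dots> = monom (c * d) (\<lambda>i. \<mu> i + l i) \<nu>"
  proof (cases "\<nu> = (\<lambda>i. \<mu> i + l i)")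
    case True
    then have "\<mu> \<in> Sle \<nu>" "(\<lambda>i. \<nu> i - \<mu> i) = l" by (auto simp: Sle_def)
    then show ?thesis using True by (simp add: monom_def)
  next
    case False
    have "\<mu> \<in> Sle \<nu> \<Longrightarrow> (\<lambda>i. \<nu> i - \<mu> i) \<noteq> l"
    proof
      assume "\<mu> \<in> Sle \<nu>" "(\<lambda>i. \<nu> i - \<mu> i) = l"
      then have "\<forall>i. \<mu> i \<le> \<nu> i" "\<forall>i. \<nu> i - \<mu> i = l i" by (auto simp: Sle_def fun_eq_iff)
      then have "\<nu> = (\<lambda>i. \<mu> i + l i)" by (auto simp: fun_eq_iff) (metis le_add_diff_inverse)
      with False show False by simp
    qed
    then show ?thesis using False by (auto simp: monom_def)
  qed
  finally show "mps_mult (monom c \<mu>) (monom d l) \<nu> = monom (c * d) (\<lambda>i. \<mu> i + l i) \<nu>" .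
qed

lemma monom_pow: "Abs_PS (monom c \<mu>) ^ m = Abs_PS (monom (c ^ m) (\<lambda>i. m * \<mu> i))"
proof (induction m)
  case 0
  have "monom 1 (\<lambda>i. 0) = (mps_one :: ('a,'b) mps)" by (simp add: monom_def mps_one_def fun_eq_iff)
  then show ?case by (simp add: one_PS_def)
next
  case (Suc m)
  have "Abs_PS (monom c \<mu>) ^ Suc m = Abs_PS (mps_mult (monom c \<mu>) (monom (c ^ m) (\<lambda>i. m * \<mu> i)))"
    using Suc by (simp add: times_PS_def Abs_PS_inverse)
  also have "\<dots> = Abs_PS (monom (c ^ Suc m) (\<lambda>i. Suc m * \<mu> i))"
    by (simp add: monom_mult)
  finally show ?case .
qed

lemma mult_local:
  assumes "\<forall>\<mu>\<in>Sle \<nu>. a \<mu> = a' \<mu>" "\<forall>\<mu>\<in>Sle \<nu>. b \<mu> = b' \<mu>" "\<mu> \<in> Sle \<nu>"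
  shows "mps_mult a b \<mu> = mps_mult a' b' \<mu>"
  unfolding mps_mult_Sle
proof (rule sum.cong[OF refl])
  fix l assume "l \<in> Sle \<mu>"
  with assms(3) have "\<forall>i. l i \<le> \<mu> i" "\<forall>i. \<mu> i \<le> \<nu> i" by (auto simp: Sle_def)
  then have "l \<in> Sle \<nu>" "(\<lambda>i. \<mu> i - l i) \<in> Sle \<nu>" unfolding Sle_def
    by (simp_all, meson le_trans, meson diff_le_self le_trans)
  then show "a l * b (\<lambda>i. \<mu> i - l i) = a' l * b' (\<lambda>i. \<mu> i - l i)" using assms by simp
qed

lemma pow_local:
  assumes "\<forall>\<mu>\<in>Sle \<nu>. a \<mu> = a' \<mu>"
  shows "\<forall>\<mu>\<in>Sle \<nu>. mps_pow a m \<mu> = mps_pow a' m \<mu>"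
proof (induction m)
  case 0 then show ?case by (simp add: mps_pow_def)
next
  case (Suc m)
  then show ?case using assms mult_local[of \<nu> a a' "mps_pow a m" "mps_pow a' m"]
    by (simp add: mps_pow_def)
qed


lemma frob_mps:
  fixes r :: "('n::finite, 'a::field) mps"
  assumes pr: "prime p" and ch: "CHAR('a) = p"
  shows "mps_pow r p \<nu> = (if \<forall>i. p dvd \<nu> i then r (\<lambda>i. \<nu> i div p) ^ p else 0)"
proof -
  have p0: "p > 0" using pr prime_gt_0_nat by blast
  define t where "t = (\<Sum>\<mu>\<in>Sle \<nu>. Abs_PS (monom (r \<mu>) \<mu>) :: ('n,'a) PS)"
  have tr: "\<forall>\<kappa>\<in>Sle \<nu>. Rep_PS t \<kappa> = r \<kappa>"
  proof
    fix \<kappa> assume k: "\<kappa> \<in> Sle \<nu>"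
    have "Rep_PS t \<kappa> = (\<Sum>\<mu>\<in>Sle \<nu>. if \<kappa> = \<mu> then r \<mu> else 0)"
      unfolding t_def Rep_sum by (simp add: Abs_PS_inverse monom_def)
    also have "\<dots> = r \<kappa>" using k by (simp add: sum.delta)
    finally show "Rep_PS t \<kappa> = r \<kappa>" .
  qed
  have nn: "\<nu> \<in> Sle \<nu>" by (simp add: Sle_def)
  have "mps_pow r p \<nu> = mps_pow (Rep_PS t) p \<nu>"
    using pow_local[of \<nu> r "Rep_PS t" p] tr nn by simp
  also have "\<dots> = Rep_PS (t ^ p) \<nu>" by (simp add: mps_pow_Rep Rep_PS_inverse)
  also have "t ^ p = (\<Sum>\<mu>\<in>Sle \<nu>. Abs_PS (monom (r \<mu>) \<mu>) ^ p)"
    unfolding t_def by (rule freshmans_dream_sum) (simp_all add: CHAR_PS ch pr)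
  also have "Rep_PS \<dots> \<nu> = (\<Sum>\<mu>\<in>Sle \<nu>. if \<nu> = (\<lambda>i. p * \<mu> i) then r \<mu> ^ p else 0)"
    unfolding Rep_sum monom_pow by (simp add: Abs_PS_inverse monom_def)
  also have "\<dots> = (\<Sum>\<mu>\<in>Sle \<nu>. if (\<lambda>i. \<nu> i div p) = \<mu> then (if \<forall>i. p dvd \<nu> i then r (\<lambda>i. \<nu> i div p) ^ p else 0) else 0)"
  proof (rule sum.cong[OF refl])
    fix \<mu>
    have "(\<nu> = (\<lambda>i. p * \<mu> i)) \<longleftrightarrow> ((\<lambda>i. \<nu> i div p) = \<mu> \<and> (\<forall>i. p dvd \<nu> i))"
      using p0 by (auto simp: fun_eq_iff) (metis dvd_mult_div_cancel)
    then show "(if \<nu> = (\<lambda>i. p * \<mu> i) then r \<mu> ^ p else 0) =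
      (if (\<lambda>i. \<nu> i div p) = \<mu> then (if \<forall>i. p dvd \<nu> i then r (\<lambda>i. \<nu> i div p) ^ p else 0) else 0)"
      by auto
  qed
  also have "\<dots> = (if \<forall>i. p dvd \<nu> i then r (\<lambda>i. \<nu> i div p) ^ p else 0)"
  proof -
    have "(\<lambda>i. \<nu> i div p) \<in> Sle \<nu>" by (simp add: Sle_def div_le_dividend)
    then show ?thesis by (simp add: sum.delta')
  qed
  finally show ?thesis .
qed


definition good_psi :: "('a::field \<Rightarrow> real) \<Rightarrow> nat \<Rightarrow> ('a \<Rightarrow> 'a) \<Rightarrow> real \<Rightarrow> bool" where
  "good_psi v p \<psi> K \<longleftrightarrow> (\<forall>x y. \<psi> (x + y) = \<psi> x + \<psi> y) \<and> (\<forall>a x. \<psi> (a ^ p * x) = a * \<psi> x) \<and>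
     \<psi> 1 = 1 \<and> K > 0 \<and> (\<forall>x. v (\<psi> x) ^ p \<le> K * v x)"

lemma self_add_zero: "(a::'a::ab_group_add) = a + a \<Longrightarrow> a = 0"
  by simp

lemma psi_sum:
  fixes \<psi> :: "'a::field \<Rightarrow> 'a"
  assumes "\<forall>x y. \<psi> (x + y) = \<psi> x + \<psi> y"
  shows "\<psi> (sum f A) = (\<Sum>a\<in>A. \<psi> (f a))"
proof -
  have "\<psi> 0 = \<psi> 0 + \<psi> 0" using assms[rule_format, of 0 0] by simp
  then have z: "\<psi> 0 = 0" by (rule self_add_zero)
  show ?thesis by (induction A rule: infinite_finite_induct) (simp_all add: z assms)
qed

lemma split_from_psi:
  fixes v :: "'a::field \<Rightarrow> real"
  assumes nv: "nonarch_abs v" and pr: "prime p" and ch: "CHAR('a) = p"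
    and g: "good_psi v p \<psi> K"
  shows "conv_ps_frobenius_split v p TYPE('n::finite)"
proof -
  have p0: "p > 0" using pr prime_gt_0_nat by blast
  have add: "\<forall>x y. \<psi> (x + y) = \<psi> x + \<psi> y" and lin: "\<And>a x. \<psi> (a ^ p * x) = a * \<psi> x"
    and one: "\<psi> 1 = 1" and K0: "K > 0" and bd: "\<And>x. v (\<psi> x) ^ p \<le> K * v x"
    using g by (auto simp: good_psi_def)
  have vpos: "\<And>x. 0 \<le> v x" using nv by (simp add: nonarch_abs_def)
  define \<phi> where "\<phi> = (\<lambda>(x::('n,'a) mps) \<mu>. \<psi> (x (\<lambda>i. p * \<mu> i)))"
  have c1: "\<forall>x\<in>(conv_ps v :: ('n,'a) mps set). \<phi> x \<in> conv_ps v"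
  proof
    fix x :: "('n,'a) mps" assume "x \<in> conv_ps v"
    then obtain r M where r: "\<forall>i. r i > 0" "M > 0" "\<forall>\<nu>. v (x \<nu>) * (\<Prod>i\<in>UNIV. r i ^ \<nu> i) \<le> M"
      by (auto simp: conv_ps_def)
    define M' where "M' = max 1 (K * M)"
    have "\<forall>\<mu>. v (\<phi> x \<mu>) * (\<Prod>i\<in>UNIV. r i ^ \<mu> i) \<le> M'"
    proof
      fix \<mu> :: "'n \<Rightarrow> nat"
      define c where "c = x (\<lambda>i. p * \<mu> i)"
      define P where "P = (\<Prod>i\<in>UNIV. r i ^ \<mu> i)"
      have P0: "P > 0" unfolding P_def using r(1) by (simp add: prod_pos)
      have "(\<Prod>i\<in>UNIV. r i ^ (p * \<mu> i)) = P ^ p"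
        unfolding P_def prod_power_distrib
        by (intro prod.cong refl) (metis mult.commute power_mult)
      then have cM: "v c * P ^ p \<le> M" using r(3) unfolding c_def by metis
      have "(v (\<psi> c) * P) ^ p = v (\<psi> c) ^ p * P ^ p" by (simp add: power_mult_distrib)
      also have "\<dots> \<le> K * v c * P ^ p" using bd P0 by (simp add: mult_right_mono)
      also have "\<dots> \<le> K * M" using cM K0 by (simp add: mult.assoc)
      also have "\<dots> \<le> M'" by (simp add: M'_def)
      also have "\<dots> \<le> M' ^ p"
      proof -
        have "1 \<le> M'" by (simp add: M'_def)
        then show ?thesis using power_increasing[of 1 p M'] p0 by simp
      qed
      finally have "(v (\<psi> c) * P) ^ p \<le> M' ^ p" .
      then have "v (\<psi> c) * P \<le> M'"
        using power_mono_iff[of "v (\<psi> c) * P" M' p] P0 vpos[of "\<psi> c"] p0 by (simp add: M'_def)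
      then show "v (\<phi> x \<mu>) * (\<Prod>i\<in>UNIV. r i ^ \<mu> i) \<le> M'" by (simp add: \<phi>_def c_def P_def)
    qed
    moreover have "M' > 0" by (simp add: M'_def)
    ultimately show "\<phi> x \<in> conv_ps v" using r(1) by (auto simp: conv_ps_def)
  qed
  have c2: "\<forall>x\<in>(conv_ps v :: ('n,'a) mps set). \<forall>y\<in>conv_ps v. \<phi> (mps_add x y) = mps_add (\<phi> x) (\<phi> y)"
    by (simp add: \<phi>_def mps_add_def add)
  have c3: "\<phi> (mps_mult (mps_pow r p) x) = mps_mult r (\<phi> x)" for r x :: "('n,'a) mps"
  proof
    fix \<mu> :: "'n \<Rightarrow> nat"
    define m where "m = (\<lambda>i. p * \<mu> i)"
    define h where "h = (\<lambda>(\<kappa>::'n \<Rightarrow> nat) i. p * \<kappa> i)"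
    have inj: "inj_on h (Sle \<mu>)" using p0 unfolding h_def inj_on_def fun_eq_iff by simp
    have hS: "h ` Sle \<mu> \<subseteq> Sle m"
    proof
      fix y assume "y \<in> h ` Sle \<mu>"
      then obtain \<kappa> where "\<kappa> \<in> Sle \<mu>" "y = h \<kappa>" by blast
      then show "y \<in> Sle m" by (simp add: Sle_def m_def h_def)
    qed
    have "mps_mult (mps_pow r p) x m = (\<Sum>l\<in>Sle m. mps_pow r p l * x (\<lambda>i. m i - l i))"
      by (rule mps_mult_Sle)
    also have "\<dots> = (\<Sum>l\<in>h ` Sle \<mu>. mps_pow r p l * x (\<lambda>i. m i - l i))"
    proof (rule sum.mono_neutral_right)
      show "finite (Sle m)" by simp
      show "h ` Sle \<mu> \<subseteq> Sle m" by (rule hS)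
      show "\<forall>l\<in>Sle m - h ` Sle \<mu>. mps_pow r p l * x (\<lambda>i. m i - l i) = 0"
      proof
        fix l assume l: "l \<in> Sle m - h ` Sle \<mu>"
        have nd: "\<not> (\<forall>i. p dvd l i)"
        proof
          assume d: "\<forall>i. p dvd l i"
          have "\<forall>i. l i \<le> p * \<mu> i" using l by (simp add: Sle_def m_def)
          then have "(\<lambda>i. l i div p) \<in> Sle \<mu>" using p0 unfolding Sle_def
            by (simp, metis div_le_mono nonzero_mult_div_cancel_left not_gr0)
          moreover have "l = h (\<lambda>i. l i div p)" using d unfolding h_def by (simp add: fun_eq_iff)
          ultimately show False using l by auto
        qed
        have "mps_pow r p l = 0" using frob_mps[OF pr ch, of r l] nd by presburger
        then show "mps_pow r p l * x (\<lambda>i. m i - l i) = 0" by simp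
      qed
    qed
    also have "\<dots> = (\<Sum>\<kappa>\<in>Sle \<mu>. mps_pow r p (h \<kappa>) * x (\<lambda>i. m i - h \<kappa> i))"
      by (rule sum.reindex[OF inj, unfolded comp_def])
    also have "\<dots> = (\<Sum>\<kappa>\<in>Sle \<mu>. r \<kappa> ^ p * x (\<lambda>i. p * (\<mu> i - \<kappa> i)))"
    proof (rule sum.cong[OF refl])
      fix \<kappa> assume "\<kappa> \<in> Sle \<mu>"
      have "(\<lambda>i. h \<kappa> i div p) = \<kappa>" using p0 by (simp add: h_def fun_eq_iff)
      moreover have "(\<lambda>i. m i - h \<kappa> i) = (\<lambda>i. p * (\<mu> i - \<kappa> i))"
        by (simp add: m_def h_def fun_eq_iff diff_mult_distrib2)
      ultimately show "mps_pow r p (h \<kappa>) * x (\<lambda>i. m i - h \<kappa> i) = r \<kappa> ^ p * x (\<lambda>i. p * (\<mu> i - \<kappa> i))"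
        by (simp add: frob_mps[OF pr ch] h_def)
    qed
    finally have eq: "mps_mult (mps_pow r p) x m = (\<Sum>\<kappa>\<in>Sle \<mu>. r \<kappa> ^ p * x (\<lambda>i. p * (\<mu> i - \<kappa> i)))" .
    show "\<phi> (mps_mult (mps_pow r p) x) \<mu> = mps_mult r (\<phi> x) \<mu>"
      unfolding \<phi>_def mps_mult_Sle[of r] using eq
      by (simp add: m_def psi_sum[OF add] lin)
  qed
  have c4: "\<phi> mps_one = mps_one"
  proof
    fix \<mu> :: "'n \<Rightarrow> nat"
    have "((\<lambda>i. p * \<mu> i) = (\<lambda>_. 0)) \<longleftrightarrow> \<mu> = (\<lambda>_. 0)" using p0 by (auto simp: fun_eq_iff)
    moreover have "\<psi> 0 = 0" using psi_sum[OF add, of "\<lambda>x. x" "{}"] by simp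
    ultimately show "\<phi> mps_one \<mu> = mps_one \<mu>" by (simp add: \<phi>_def mps_one_def one)
  qed
  show ?thesis unfolding conv_ps_frobenius_split_def
    by (rule exI[of _ \<phi>]) (use c1 c2 c3 c4 in simp)
qed


context
  fixes v :: "'a::field \<Rightarrow> real"
  assumes nv: "nonarch_abs v"
begin

lemma v_nonneg: "0 \<le> v x" using nv by (simp add: nonarch_abs_def)
lemma v_zero_iff: "v x = 0 \<longleftrightarrow> x = 0" using nv by (simp add: nonarch_abs_def)
lemma v_0: "v 0 = 0" using v_zero_iff by simp
lemma v_pos: "x \<noteq> 0 \<Longrightarrow> 0 < v x" using v_nonneg v_zero_iff by (simp add: less_le)
lemma v_mult: "v (x * y) = v x * v y" using nv by (simp add: nonarch_abs_def)
lemma v_add: "v (x + y) \<le> max (v x) (v y)" using nv by (simp add: nonarch_abs_def)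

lemma v_1: "v 1 = 1"
proof -
  have "v 1 * v 1 = v 1 * 1" using v_mult[of 1 1] by simp
  moreover have "v 1 \<noteq> 0" using v_zero_iff by simp
  ultimately show ?thesis by simp
qed

lemma v_uminus: "v (- x) = v x"
proof -
  have "v (-1) * v (-1) = 1" using v_mult[of "-1" "-1"] v_1 by simp
  moreover have "v (-1) \<ge> 0" by (rule v_nonneg)
  ultimately have "(v (-1) - 1) * (v (-1) + 1) = 0" by (simp add: algebra_simps)
  moreover have "v (-1) + 1 \<noteq> 0" using \<open>v (-1) \<ge> 0\<close> by simp
  ultimately have "v (-1) = 1" by simp
  then show ?thesis using v_mult[of "-1" x] by simp
qed

lemma v_diff_comm: "v (x - y) = v (y - x)"
  using v_uminus[of "y - x"] by simp

lemma v_diff: "v (x - y) \<le> max (v x) (v y)"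
  using v_add[of x "-y"] v_uminus[of y] by simp

lemma v_power: "v (x ^ n) = v x ^ n"
  by (induction n) (simp_all add: v_1 v_mult)

lemma v_inverse: "v (inverse x) = inverse (v x)"
proof (cases "x = 0")
  case True then show ?thesis by (simp add: v_0)
next
  case False
  then have "v (inverse x) * v x = 1" using v_mult[of "inverse x" x] v_1 by simp
  moreover have "v x \<noteq> 0" using False v_zero_iff by simp
  ultimately show ?thesis by (simp add: field_simps)
qed

lemma v_divide: "v (x / y) = v x / v y"
  by (simp add: divide_inverse v_mult v_inverse)

lemma v_iso: "v y < v x \<Longrightarrow> v (x + y) = v x"
proof -
  assume lt: "v y < v x"
  have a: "v (x + y) \<le> v x" using v_add[of x y] lt by simp
  have "v x = v ((x + y) - y)" by simp
  also have "\<dots> \<le> max (v (x + y)) (v y)" by (rule v_diff)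
  finally have "v x \<le> v (x + y)" using lt by (auto simp: max_def split: if_splits)
  with a show ?thesis by simp
qed

lemma v_trans3: "v (x - z) \<le> max (v (x - y)) (v (y - z))"
  using v_add[of "x - y" "y - z"] by simp

end

lemma frob_diff:
  fixes x y :: "'a::field"
  assumes "CHAR('a) = p" "prime p"
  shows "(x - y) ^ p = x ^ p - y ^ p"
proof -
  have "(x + (- y)) ^ p = x ^ p + (- y) ^ p" by (rule freshmans_dream) (use assms in auto)
  moreover have "(- y) ^ p = - (y ^ p)" by (rule minus_power_prime_CHAR) (use assms in auto)
  ultimately show ?thesis by simp
qed

lemma frob_add:
  fixes x y :: "'a::field"
  assumes "CHAR('a) = p" "prime p"
  shows "(x + y) ^ p = x ^ p + y ^ p"
  by (rule freshmans_dream) (use assms in auto)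


lemma exists_big:
  fixes v :: "'a::field \<Rightarrow> real"
  assumes nv: "nonarch_abs v" and nt: "nontrivial_value_group v"
  shows "\<exists>a. v a > 1"
proof -
  obtain x where x: "x \<noteq> 0" "v x \<noteq> 1" using nt by (auto simp: nontrivial_value_group_def)
  show ?thesis
  proof (cases "v x > 1")
    case True then show ?thesis by blast
  next
    case False
    then have "v x < 1" using x by simp
    moreover have "v x > 0" using v_pos[OF nv x(1)] .
    ultimately have "v (inverse x) > 1" using v_inverse[OF nv, of x] by (simp add: one_less_inverse)
    then show ?thesis by blast
  qed
qed

lemma scale_exists:
  fixes v :: "'a::field \<Rightarrow> real"
  assumes nv: "nonarch_abs v" and a: "v a > 1" and t: "t > 0" and p0: "p > 0"
  shows "\<exists>c. c \<noteq> 0 \<and> v c ^ p * t \<le> 1 \<and> 1 < v c ^ p * t * v a ^ p"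
proof -
  define B where "B = v a ^ p"
  have B1: "B > 1" unfolding B_def using a p0 by (simp add: one_less_power)
  have a0: "a \<noteq> 0" using a v_0[OF nv] by auto
  show ?thesis
  proof (cases "t \<le> 1")
    case True
    have ex: "\<exists>m. 1 < B ^ (m + 1) * t"
    proof -
      obtain n where "inverse t < B ^ n" using real_arch_pow[OF B1] by blast
      then have "1 < B ^ n * t" using t by (simp add: field_simps)
      moreover have "B ^ n \<le> B ^ (n + 1)" using B1 by (simp add: power_increasing)
      ultimately have "1 < B ^ (n + 1) * t" using t by (smt (verit) mult_right_mono)
      then show ?thesis by blast
    qed
    define m where "m = (LEAST m. 1 < B ^ (m + 1) * t)"
    have m1: "1 < B ^ (m + 1) * t" unfolding m_def using ex by (rule LeastI_ex)
    have m2: "B ^ m * t \<le> 1"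
    proof (cases m)
      case 0 then show ?thesis using True by simp
    next
      case (Suc k)
      have "\<not> 1 < B ^ (k + 1) * t"
      proof
        assume "1 < B ^ (k + 1) * t"
        then have "m \<le> k" unfolding m_def by (rule Least_le)
        with Suc show False by simp
      qed
      then show ?thesis using Suc by simp
    qed
    have vc: "v (a ^ m) ^ p = B ^ m" unfolding B_def v_power[OF nv] by (simp add: power_mult[symmetric] mult.commute)
    show ?thesis
    proof (intro exI conjI)
      show "a ^ m \<noteq> 0" using a0 by simp
      show "v (a ^ m) ^ p * t \<le> 1" using vc m2 by simp
      show "1 < v (a ^ m) ^ p * t * v a ^ p" using vc m1 by (simp add: B_def[symmetric] mult_ac)
    qed
  next
    case False
    have ex: "\<exists>m. t \<le> B ^ m"
      using real_arch_pow[OF B1, of t] by (auto intro: less_imp_le)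
    define m where "m = (LEAST m. t \<le> B ^ m)"
    have m1: "t \<le> B ^ m" unfolding m_def using ex by (rule LeastI_ex)
    have mpos: "m \<noteq> 0"
    proof
      assume "m = 0" with m1 False show False by simp
    qed
    then obtain k where k: "m = Suc k" by (cases m) auto
    have m2: "B ^ k < t"
    proof (rule ccontr)
      assume "\<not> B ^ k < t"
      then have "t \<le> B ^ k" by simp
      then have "m \<le> k" unfolding m_def by (rule Least_le)
      with k show False by simp
    qed
    have Bp: "B ^ m > 0" using B1 by simp
    have vc: "v (inverse a ^ m) ^ p = inverse (B ^ m)"
      unfolding B_def v_power[OF nv] v_inverse[OF nv]
      by (simp add: power_mult[symmetric] mult.commute power_inverse)
    show ?thesis
    proof (intro exI conjI)
      show "inverse a ^ m \<noteq> 0" using a0 by simp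
      show "v (inverse a ^ m) ^ p * t \<le> 1" using vc m1 Bp by (simp add: field_simps)
      have "B ^ m = B ^ k * B" using k by simp
      moreover have Bk: "B ^ k > 0" using B1 by simp
      ultimately have "v (inverse a ^ m) ^ p * t * v a ^ p = t / B ^ k"
        using vc B1 by (simp add: B_def[symmetric] field_simps)
      moreover have "1 < t / B ^ k" using m2 Bk by simp
      ultimately show "1 < v (inverse a ^ m) ^ p * t * v a ^ p" by simp
    qed
  qed
qed

lemma psi_polar:
  fixes v :: "'a::field \<Rightarrow> real"
  assumes nv: "nonarch_abs v" and nt: "nontrivial_value_group v" and p0: "p > 0"
    and pol: "rp_polar v p"
  shows "\<exists>\<psi> K. good_psi v p \<psi> K"
proof -
  obtain a where a: "v a > 1" using exists_big[OF nv nt] by blast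
  have a0: "a \<noteq> 0" using a v_0[OF nv] by auto
  have va: "v (a ^ p) > 1" using a p0 v_power[OF nv] by (simp add: one_less_power)
  have "rp_norm v p (a ^ p) > 1"
  proof -
    have "1 powr (1 / real p) < v (a ^ p) powr (1 / real p)"
      by (rule powr_less_mono2) (use va p0 in auto)
    then show ?thesis by (simp add: rp_norm_def)
  qed
  then obtain f where fadd: "\<forall>y z. f (y + z) = f y + f z" and flin: "\<forall>b y. f (rp_smul p b y) = b * f y"
    and fb: "\<forall>y. rp_norm v p y \<le> 1 \<longrightarrow> v (f y) \<le> 1" and fa: "v (f (a ^ p)) > 1"
    using pol unfolding rp_polar_def by blast
  have flin': "\<And>b y. f (b ^ p * y) = b * f y" using flin by (simp add: rp_smul_def)
  have fb': "\<And>y. v y \<le> 1 \<Longrightarrow> v (f y) \<le> 1"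
  proof -
    fix y :: 'a assume "v y \<le> 1"
    then have "v y powr (1 / real p) \<le> 1 powr (1 / real p)"
      by (intro powr_mono2) (use v_nonneg[OF nv] in auto)
    then show "v (f y) \<le> 1" using fb by (simp add: rp_norm_def)
  qed
  have "f (a ^ p) = a * f 1" using flin'[of a 1] by simp
  then have f1: "f 1 \<noteq> 0" using fa v_0[OF nv] by auto
  have f0: "f 0 = 0"
  proof -
    have "f 0 = f 0 + f 0" using fadd[rule_format, of 0 0] by simp
    then show ?thesis by (rule self_add_zero)
  qed
  define B where "B = v a ^ p"
  have bd: "v (f y) ^ p \<le> B * v y" for y
  proof (cases "y = 0")
    case True then show ?thesis using f0 v_0[OF nv] p0 by (simp add: power_0_left)
  next
    case False
    then have t: "v y > 0" using v_pos[OF nv] by blast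
    obtain c where c: "c \<noteq> 0" "v c ^ p * v y \<le> 1" "1 < v c ^ p * v y * v a ^ p"
      using scale_exists[OF nv a t p0] by blast
    have "v (c ^ p * y) \<le> 1" using c(2) by (simp add: v_mult[OF nv] v_power[OF nv])
    then have "v (f (c ^ p * y)) \<le> 1" by (rule fb')
    then have le: "v c * v (f y) \<le> 1" by (simp add: flin' v_mult[OF nv])
    have vc: "v c > 0" using v_pos[OF nv c(1)] .
    have "(v c * v (f y)) ^ p \<le> 1"
      using le by (simp add: power_le_one v_nonneg[OF nv])
    then have "v c ^ p * v (f y) ^ p \<le> 1" by (simp add: power_mult_distrib)
    moreover have "v c ^ p > 0" using vc by simp
    ultimately have "v (f y) ^ p \<le> inverse (v c ^ p)" by (simp add: field_simps)
    also have "\<dots> < v y * B" using c(3) vc by (simp add: B_def field_simps)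
    finally show ?thesis by (simp add: mult.commute)
  qed
  define \<psi> where "\<psi> = (\<lambda>y. f y / f 1)"
  define K where "K = B / v (f 1) ^ p"
  have vf1: "v (f 1) > 0" using v_pos[OF nv f1] .
  have "good_psi v p \<psi> K"
    unfolding good_psi_def
  proof (intro conjI allI)
    show "\<psi> (x + y) = \<psi> x + \<psi> y" for x y using fadd by (simp add: \<psi>_def add_divide_distrib)
    show "\<psi> (b ^ p * x) = b * \<psi> x" for b x by (simp add: \<psi>_def flin')
    show "\<psi> 1 = 1" using f1 by (simp add: \<psi>_def)
    show "K > 0" using a vf1 by (simp add: K_def B_def)
    show "v (\<psi> x) ^ p \<le> K * v x" for x
    proof -
      have "v (\<psi> x) ^ p = v (f x) ^ p / v (f 1) ^ p" by (simp add: \<psi>_def v_divide[OF nv] power_divide)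
      also have "\<dots> \<le> B * v x / v (f 1) ^ p" using bd[of x] vf1 by (simp add: divide_right_mono)
      finally show ?thesis by (simp add: K_def)
    qed
  qed
  then show ?thesis by blast
qed


lemma sc_family:
  fixes v :: "'a::field \<Rightarrow> real" and c :: "'i \<Rightarrow> 'a" and r :: "'i \<Rightarrow> real"
  assumes nv: "nonarch_abs v" and sc: "spherically_complete v"
    and I: "I \<noteq> {}" and rpos: "\<forall>i\<in>I. r i > 0"
    and pw: "\<forall>i\<in>I. \<forall>j\<in>I. v (c i - c j) \<le> max (r i) (r j)"
  shows "\<exists>s. \<forall>i\<in>I. v (s - c i) \<le> r i"
proof (cases "\<exists>i0\<in>I. \<forall>i\<in>I. r i0 \<le> r i")
  case True
  then obtain i0 where i0: "i0 \<in> I" "\<forall>i\<in>I. r i0 \<le> r i" by blast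
  show ?thesis
  proof (intro exI ballI)
    fix i assume i: "i \<in> I"
    have "v (c i0 - c i) \<le> max (r i0) (r i)" using pw i i0 by blast
    then show "v (c i0 - c i) \<le> r i" using i0 i by (simp add: max_def)
  qed
next
  case False
  then have nomin: "\<forall>i\<in>I. \<exists>j\<in>I. r j < r i" by (auto simp: not_le)
  define \<rho> where "\<rho> = Inf (r ` I)"
  have bdd: "bdd_below (r ` I)"
  proof (rule bdd_belowI[of _ 0])
    fix x assume "x \<in> r ` I" then show "0 \<le> x" using rpos by (auto intro: less_imp_le)
  qed
  have ne: "r ` I \<noteq> {}" using I by simp
  have gt: "\<forall>i\<in>I. \<rho> < r i"
  proof
    fix i assume i: "i \<in> I"
    obtain j where j: "j \<in> I" "r j < r i" using nomin i by blast
    have "\<rho> \<le> r j" unfolding \<rho>_def using bdd j by (auto intro: cInf_lower)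
    then show "\<rho> < r i" using j by simp
  qed
  have ex_step: "\<exists>j. j \<in> I \<and> r j < r i \<and> r j < \<rho> + 1 / real (Suc n)" if i: "i \<in> I" for i n
  proof -
    have "\<rho> < min (r i) (\<rho> + 1 / real (Suc n))" using gt i by simp
    then obtain y where "y \<in> r ` I" "y < min (r i) (\<rho> + 1 / real (Suc n))"
      using cInf_less_iff[OF ne bdd] unfolding \<rho>_def by blast
    then show ?thesis by auto
  qed
  obtain j0 where j0: "j0 \<in> I" using I by blast
  define J where "J = rec_nat j0 (\<lambda>n jn. SOME j. j \<in> I \<and> r j < r jn \<and> r j < \<rho> + 1 / real (Suc n))"
  have J0: "J 0 = j0" by (simp add: J_def)
  have JS: "J (Suc n) = (SOME j. j \<in> I \<and> r j < r (J n) \<and> r j < \<rho> + 1 / real (Suc n))" for n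
    by (simp add: J_def)
  have JI: "J n \<in> I" for n
  proof (induction n)
    case 0 then show ?case using J0 j0 by simp
  next
    case (Suc n)
    show ?case unfolding JS using someI_ex[OF ex_step[OF Suc, of n]] by blast
  qed
  have Jdec: "r (J (Suc n)) < r (J n) \<and> r (J (Suc n)) < \<rho> + 1 / real (Suc n)" for n
    unfolding JS using someI_ex[OF ex_step[OF JI[of n], of n]] by blast
  have nest: "closed_disk v (c (J (Suc n))) (r (J (Suc n))) \<subseteq> closed_disk v (c (J n)) (r (J n))" for n
  proof
    fix x assume "x \<in> closed_disk v (c (J (Suc n))) (r (J (Suc n)))"
    then have x1: "v (x - c (J (Suc n))) \<le> r (J (Suc n))" by (simp add: closed_disk_def)
    have "v (c (J (Suc n)) - c (J n)) \<le> max (r (J (Suc n))) (r (J n))" using pw JI by blast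
    then have x2: "v (c (J (Suc n)) - c (J n)) \<le> r (J n)" using Jdec[of n] by simp
    have "v (x - c (J n)) \<le> max (v (x - c (J (Suc n)))) (v (c (J (Suc n)) - c (J n)))"
      by (rule v_trans3[OF nv])
    also have "\<dots> \<le> r (J n)" using x1 x2 Jdec[of n] by simp
    finally show "x \<in> closed_disk v (c (J n)) (r (J n))" by (simp add: closed_disk_def)
  qed
  have "(\<Inter>n. closed_disk v (c (J n)) (r (J n))) \<noteq> {}"
  proof -
    have "\<forall>n. 0 < (r \<circ> J) n" using rpos JI by simp
    moreover have "\<forall>n. closed_disk v ((c \<circ> J) (Suc n)) ((r \<circ> J) (Suc n)) \<subseteq> closed_disk v ((c \<circ> J) n) ((r \<circ> J) n)"
      using nest by simp
    ultimately have "(\<Inter>n. closed_disk v ((c \<circ> J) n) ((r \<circ> J) n)) \<noteq> {}"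
      using sc unfolding spherically_complete_def by blast
    then show ?thesis by simp
  qed
  then obtain s where s: "\<forall>n. v (s - c (J n)) \<le> r (J n)" by (auto simp: closed_disk_def)
  show ?thesis
  proof (intro exI ballI)
    fix i assume i: "i \<in> I"
    have "r i - \<rho> > 0" using gt i by simp
    then obtain n where n: "1 / real (Suc n) < r i - \<rho>"
      using reals_Archimedean by (metis inverse_eq_divide of_nat_Suc)
    have lt: "r (J (Suc n)) < r i" using Jdec[of n] n by simp
    have "v (c (J (Suc n)) - c i) \<le> max (r (J (Suc n))) (r i)" using pw JI i by blast
    then have y2: "v (c (J (Suc n)) - c i) \<le> r i" using lt by simp
    have "v (s - c i) \<le> max (v (s - c (J (Suc n)))) (v (c (J (Suc n)) - c i))"
      by (rule v_trans3[OF nv])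
    also have "\<dots> \<le> r i" using s[rule_format, of "Suc n"] y2 lt by simp
    finally show "v (s - c i) \<le> r i" .
  qed
qed


definition orth :: "('a::field \<Rightarrow> real) \<Rightarrow> 'a set \<Rightarrow> bool" where
  "orth v H \<longleftrightarrow> (\<forall>h\<in>H. 1 \<le> v (1 - h))"

lemma sub_smul: "rp_subspace p H \<Longrightarrow> h \<in> H \<Longrightarrow> b ^ p * h \<in> H"
  unfolding rp_subspace_def rp_smul_def by blast

lemma sub_add: "rp_subspace p H \<Longrightarrow> h \<in> H \<Longrightarrow> g \<in> H \<Longrightarrow> h + g \<in> H"
  unfolding rp_subspace_def by blast

lemma sub_zero: "rp_subspace p H \<Longrightarrow> 0 \<in> H"
  unfolding rp_subspace_def by blast

lemma sub_neg:
  fixes H :: "'a::field set"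
  assumes "rp_subspace p H" "h \<in> H" "CHAR('a) = p" "prime p"
  shows "- h \<in> H"
proof -
  have "(-1::'a) ^ p = - (1 ^ p)" by (rule minus_power_prime_CHAR) (use assms in auto)
  then have "- h = (-1) ^ p * h" by simp
  then show ?thesis using sub_smul[OF assms(1,2)] by metis
qed

lemma sub_diff:
  fixes H :: "'a::field set"
  assumes "rp_subspace p H" "h \<in> H" "g \<in> H" "CHAR('a) = p" "prime p"
  shows "h - g \<in> H"
  using sub_add[OF assms(1,2) sub_neg[OF assms(1,3,4,5)]] by simp

lemma orth_scaled:
  fixes v :: "'a::field \<Rightarrow> real"
  assumes nv: "nonarch_abs v" and H: "rp_subspace p H" and o: "orth v H" and h: "h \<in> H"
  shows "v b ^ p \<le> v (b ^ p - h)"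
proof (cases "b = 0")
  case True
  have "p = 0 \<or> p > 0" by auto
  then show ?thesis using True v_nonneg[OF nv] v_0[OF nv] o h by (auto simp: power_0_left orth_def)
next
  case False
  define h' where "h' = inverse b ^ p * h"
  have h': "h' \<in> H" unfolding h'_def by (rule sub_smul[OF H h])
  have "b ^ p - h = b ^ p * (1 - h')" using False by (simp add: h'_def field_simps power_inverse)
  then have "v (b ^ p - h) = v b ^ p * v (1 - h')" by (simp add: v_mult[OF nv] v_power[OF nv])
  moreover have "1 \<le> v (1 - h')" using o h' by (simp add: orth_def)
  moreover have "0 \<le> v b ^ p" using v_nonneg[OF nv] by simp
  ultimately show ?thesis by (metis mult_left_mono mult.right_neutral)
qed


lemma pow_max: "0 \<le> a \<Longrightarrow> 0 \<le> b \<Longrightarrow> max (a ^ p) (b ^ p) = (max a b) ^ (p::nat)" for a b :: real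
proof (cases "a \<le> b")
  case True
  assume "0 \<le> a" "0 \<le> b"
  then have "a ^ p \<le> b ^ p" using True by (simp add: power_mono)
  then show ?thesis using True by (simp add: max_def)
next
  case False
  assume "0 \<le> a" "0 \<le> b"
  then have "b ^ p \<le> a ^ p" using False by (simp add: power_mono)
  then show ?thesis using False by (simp add: max_def)
qed

lemma maximal_orth_exists:
  fixes v :: "'a::field \<Rightarrow> real"
  assumes nv: "nonarch_abs v"
  shows "\<exists>M. rp_subspace p M \<and> orth v M \<and> (\<forall>X. rp_subspace p X \<and> orth v X \<and> M \<subseteq> X \<longrightarrow> X = M)"
proof -
  define A where "A = {H. rp_subspace p H \<and> orth v (H::'a set)}"
  have "\<forall>C\<in>chains A. \<exists>U\<in>A. \<forall>X\<in>C. X \<subseteq> U"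
  proof
    fix C assume C: "C \<in> chains A"
    then have CA: "C \<subseteq> A" and ch: "\<forall>X\<in>C. \<forall>Y\<in>C. X \<subseteq> Y \<or> Y \<subseteq> X"
      by (auto simp: chains_def chain_subset_def)
    show "\<exists>U\<in>A. \<forall>X\<in>C. X \<subseteq> U"
    proof (cases "C = {}")
      case True
      have "{0} \<in> A" unfolding A_def rp_subspace_def orth_def rp_smul_def using v_1[OF nv] by simp
      then show ?thesis using True by blast
    next
      case False
      have sub: "rp_subspace p (\<Union>C)"
        unfolding rp_subspace_def
      proof (intro conjI ballI allI)
        obtain X where X: "X \<in> C" using False by blast
        then have "rp_subspace p X" using CA by (auto simp: A_def)
        then show "0 \<in> \<Union>C" using X sub_zero by blast
      next
        fix x y assume x: "x \<in> \<Union>C" and y: "y \<in> \<Union>C"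
        then obtain X Y where XY: "X \<in> C" "Y \<in> C" "x \<in> X" "y \<in> Y" by blast
        have XA: "rp_subspace p X" "rp_subspace p Y" using XY CA by (auto simp: A_def)
        show "x + y \<in> \<Union>C"
        proof (cases "X \<subseteq> Y")
          case True
          then have "x + y \<in> Y" using XY sub_add[OF XA(2)] by blast
          then show ?thesis using XY by blast
        next
          case False
          then have "Y \<subseteq> X" using ch XY by blast
          then have "x + y \<in> X" using XY sub_add[OF XA(1)] by blast
          then show ?thesis using XY by blast
        qed
      next
        fix a x assume "x \<in> \<Union>C"
        then obtain X where X: "X \<in> C" "x \<in> X" by blast
        then have "rp_subspace p X" using CA by (auto simp: A_def)
        then have "rp_smul p a x \<in> X" using X unfolding rp_subspace_def by blast
        then show "rp_smul p a x \<in> \<Union>C" using X by blast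
      qed
      have "orth v (\<Union>C)" using CA by (auto simp: A_def orth_def)
      with sub have "\<Union>C \<in> A" by (simp add: A_def)
      then show ?thesis by blast
    qed
  qed
  then obtain M where "M \<in> A" "\<forall>X\<in>A. M \<subseteq> X \<longrightarrow> X = M" using Zorn_Lemma2 by blast
  then show ?thesis by (auto simp: A_def)
qed

lemma sc_repr:
  fixes v :: "'a::field \<Rightarrow> real"
  assumes nv: "nonarch_abs v" and sc: "spherically_complete v" and ch: "CHAR('a) = p" and pr: "prime p"
    and M: "rp_subspace p M" "orth v M" and mx: "\<forall>X. rp_subspace p X \<and> orth v X \<and> M \<subseteq> X \<longrightarrow> X = M"
  shows "\<exists>c h. h \<in> M \<and> x = c ^ p + h"
proof (rule ccontr)
  assume nx: "\<not> (\<exists>c h. h \<in> M \<and> x = c ^ p + h)"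
  have p0: "p > 0" using pr prime_gt_0_nat by blast
  define I where "I = (UNIV :: 'a set) \<times> M"
  define R where "R = (\<lambda>(u, h). root p (v (u ^ p - x - h)))"
  define cc where "cc = (\<lambda>(u::'a, h::'a). u)"
  have Rp: "(R i) ^ p = v (u ^ p - x - h)" if "i = (u, h)" for i u h
    using that p0 v_nonneg[OF nv] by (simp add: R_def)
  have Rpos: "\<forall>i\<in>I. R i > 0"
  proof
    fix i assume "i \<in> I"
    then obtain u h where i: "i = (u, h)" "h \<in> M" by (auto simp: I_def)
    have "- h \<in> M" by (rule sub_neg[OF M(1) i(2) ch pr])
    have "u ^ p - x - h \<noteq> 0"
    proof
      assume z: "u ^ p - x - h = 0"
      have "x - (u ^ p + - h) = - (u ^ p - x - h)" by (simp add: algebra_simps)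
      then have "x = u ^ p + - h" using z by simp
      then show False using nx \<open>- h \<in> M\<close> by blast
    qed
    then have "v (u ^ p - x - h) > 0" using v_pos[OF nv] by blast
    then show "R i > 0" using i p0 by (simp add: R_def)
  qed
  have pw: "\<forall>i\<in>I. \<forall>j\<in>I. v (cc i - cc j) \<le> max (R i) (R j)"
  proof (intro ballI)
    fix i j assume "i \<in> I" "j \<in> I"
    then obtain u h u' h' where ij: "i = (u, h)" "j = (u', h')" "h \<in> M" "h' \<in> M" by (auto simp: I_def)
    have hh: "h - h' \<in> M" by (rule sub_diff[OF M(1) ij(3,4) ch pr])
    have "v (u - u') ^ p \<le> v ((u - u') ^ p - (h - h'))"
      by (rule orth_scaled[OF nv M hh])
    also have "(u - u') ^ p - (h - h') = (u ^ p - x - h) - (u' ^ p - x - h')"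
      using frob_diff[OF ch pr, of u u'] by simp
    also have "v \<dots> \<le> max (v (u ^ p - x - h)) (v (u' ^ p - x - h'))" by (rule v_diff[OF nv])
    also have "\<dots> = max (R i ^ p) (R j ^ p)" using Rp ij by simp
    also have "\<dots> = max (R i) (R j) ^ p"
      using pow_max[of "R i" "R j" p] Rpos \<open>i \<in> I\<close> \<open>j \<in> I\<close> by (simp add: less_imp_le)
    finally have "v (u - u') ^ p \<le> max (R i) (R j) ^ p" .
    then have "v (u - u') \<le> max (R i) (R j)"
      using power_mono_iff[of "v (u - u')" "max (R i) (R j)" p] v_nonneg[OF nv] Rpos \<open>i \<in> I\<close> p0
      by (simp add: le_max_iff_disj less_imp_le)
    then show "v (cc i - cc j) \<le> max (R i) (R j)" using ij by (simp add: cc_def)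
  qed
  have "I \<noteq> {}" using sub_zero[OF M(1)] by (auto simp: I_def)
  then obtain s where s: "\<forall>i\<in>I. v (s - cc i) \<le> R i"
    using sc_family[OF nv sc _ Rpos pw] by blast
  have sbound: "v (s - u) ^ p \<le> v (u ^ p - x - h)" if "h \<in> M" for u h
  proof -
    have "v (s - u) \<le> R (u, h)" using s that by (auto simp: I_def cc_def)
    then have "v (s - u) ^ p \<le> R (u, h) ^ p" using v_nonneg[OF nv] by (simp add: power_mono)
    then show ?thesis using Rp[of "(u, h)" u h] by simp
  qed
  define e where "e = x - s ^ p"
  define X where "X = {h + b ^ p * e | h b. h \<in> M}"
  have subX: "rp_subspace p X"
    unfolding rp_subspace_def rp_smul_def
  proof (intro conjI ballI allI)
    show "0 \<in> X" unfolding X_def using sub_zero[OF M(1)] p0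
      by (auto intro!: exI[of _ 0] simp: power_0_left)
  next
    fix y z assume "y \<in> X" "z \<in> X"
    then obtain h1 b1 h2 b2 where "y = h1 + b1 ^ p * e" "z = h2 + b2 ^ p * e" "h1 \<in> M" "h2 \<in> M"
      by (auto simp: X_def)
    moreover have "(b1 + b2) ^ p = b1 ^ p + b2 ^ p" by (rule frob_add[OF ch pr])
    ultimately have "y + z = (h1 + h2) + (b1 + b2) ^ p * e" "h1 + h2 \<in> M"
      using sub_add[OF M(1)] by (auto simp: algebra_simps)
    then show "y + z \<in> X" unfolding X_def by blast
  next
    fix a y assume "y \<in> X"
    then obtain h b where "y = h + b ^ p * e" "h \<in> M" by (auto simp: X_def)
    then have "a ^ p * y = a ^ p * h + (a * b) ^ p * e" "a ^ p * h \<in> M"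
      using sub_smul[OF M(1)] by (auto simp: algebra_simps power_mult_distrib)
    then show "a ^ p * y \<in> X" unfolding X_def by blast
  qed
  have orthX: "orth v X"
    unfolding orth_def
  proof
    fix y assume "y \<in> X"
    then obtain h b where y: "y = h + b ^ p * e" "h \<in> M" by (auto simp: X_def)
    show "1 \<le> v (1 - y)"
    proof (cases "b = 0")
      case True
      then show ?thesis using y M(2) p0 by (simp add: orth_def power_0_left)
    next
      case False
      define u where "u = inverse b + s"
      define h'' where "h'' = inverse b ^ p * h"
      have h'': "h'' \<in> M" unfolding h''_def by (rule sub_smul[OF M(1) y(2)])
      have up: "u ^ p = inverse b ^ p + s ^ p" unfolding u_def by (rule frob_add[OF ch pr])
      have "b ^ p * (u ^ p - x - h'') = 1 - y"
        using False unfolding up y(1) h''_def e_def by (simp add: field_simps power_inverse)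
      then have "v (1 - y) = v (b ^ p * (u ^ p - x - h''))" by simp
      then have "v (1 - y) = v b ^ p * v (u ^ p - x - h'')" by (simp add: v_mult[OF nv] v_power[OF nv])
      moreover have "v (s - u) ^ p \<le> v (u ^ p - x - h'')" by (rule sbound[OF h''])
      moreover have "v (s - u) = inverse (v b)" unfolding u_def
        using v_uminus[OF nv, of "inverse b"] v_inverse[OF nv] by simp
      moreover have "v b > 0" using v_pos[OF nv False] .
      ultimately have "v b ^ p * inverse (v b) ^ p \<le> v (1 - y)"
        by (simp add: mult_left_mono)
      then show ?thesis using \<open>v b > 0\<close> by (simp add: power_inverse[symmetric] power_mult_distrib[symmetric])
    qed
  qed
  have "M \<subseteq> X"
  proof
    fix h assume "h \<in> M"
    then have "h = h + 0 ^ p * e" using p0 by (simp add: power_0_left)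
    then show "h \<in> X" using \<open>h \<in> M\<close> unfolding X_def by blast
  qed
  then have "X = M" using mx subX orthX by blast
  moreover have "e \<in> X"
  proof -
    have "e = 0 + 1 ^ p * e" by simp
    then show ?thesis unfolding X_def using sub_zero[OF M(1)] by blast
  qed
  ultimately have "e \<in> M" by simp
  moreover have "x = s ^ p + e" by (simp add: e_def)
  ultimately show False using nx by blast
qed


lemma psi_from_orth:
  fixes v :: "'a::field \<Rightarrow> real"
  assumes nv: "nonarch_abs v" and ch: "CHAR('a) = p" and pr: "prime p"
    and M: "rp_subspace p M" "orth v M" and rep: "\<forall>x. \<exists>c h. h \<in> M \<and> x = c ^ p + h"
  shows "\<exists>\<psi> K. good_psi v p \<psi> K"
proof -
  have p0: "p > 0" using pr prime_gt_0_nat by blast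
  have uniq: "c = c'" if "h \<in> M" "h' \<in> M" "c ^ p + h = c' ^ p + h'" for c c' h h'
  proof -
    have d: "h' - h \<in> M" by (rule sub_diff[OF M(1) that(2,1) ch pr])
    have e1: "c ^ p - c' ^ p - (h' - h) = (c ^ p + h) - (c' ^ p + h')" by (simp add: algebra_simps)
    have "(c - c') ^ p = c ^ p - c' ^ p" by (rule frob_diff[OF ch pr])
    also have "\<dots> = h' - h" using e1 that(3) by simp
    finally have "(c - c') ^ p = h' - h" .
    then have "v (c - c') ^ p \<le> v (0::'a)"
      using orth_scaled[OF nv M d, of "c - c'"] by simp
    then have "v (c - c') ^ p \<le> 0" by (simp add: v_0[OF nv])
    moreover have "0 \<le> v (c - c') ^ p" using v_nonneg[OF nv] by simp
    ultimately have "v (c - c') ^ p = 0" by simp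
    then have "v (c - c') = 0" by simp
    then show ?thesis using v_zero_iff[OF nv] by simp
  qed
  define \<psi> where "\<psi> = (\<lambda>x. SOME c. \<exists>h\<in>M. x = c ^ p + h)"
  have psi_rep: "\<exists>h\<in>M. x = \<psi> x ^ p + h" for x
    unfolding \<psi>_def by (rule someI_ex) (use rep in blast)
  have psi_eq: "\<psi> x = c" if "h \<in> M" "x = c ^ p + h" for x c h
  proof -
    obtain h' where "h' \<in> M" "x = \<psi> x ^ p + h'" using psi_rep by blast
    then show ?thesis using uniq[of h' h "\<psi> x" c] that by simp
  qed
  have "good_psi v p \<psi> 1"
    unfolding good_psi_def
  proof (intro conjI allI)
    fix x y :: 'a
    obtain c hx where hx: "hx \<in> M" "x = c ^ p + hx" using rep by blast
    obtain d hy where hy: "hy \<in> M" "y = d ^ p + hy" using rep by blast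
    have "x + y = (c + d) ^ p + (hx + hy)"
      using hx hy frob_add[OF ch pr, of c d] by (simp add: algebra_simps)
    then have "\<psi> (x + y) = c + d" using psi_eq sub_add[OF M(1) hx(1) hy(1)] by blast
    moreover have "\<psi> x = c" "\<psi> y = d" using psi_eq hx hy by blast+
    ultimately show "\<psi> (x + y) = \<psi> x + \<psi> y" by simp
  next
    fix a x :: 'a
    obtain c hx where hx: "hx \<in> M" "x = c ^ p + hx" using rep by blast
    have "a ^ p * x = (a * c) ^ p + a ^ p * hx" using hx by (simp add: algebra_simps power_mult_distrib)
    then have "\<psi> (a ^ p * x) = a * c" using psi_eq sub_smul[OF M(1) hx(1)] by blast
    moreover have "\<psi> x = c" using psi_eq hx by blast
    ultimately show "\<psi> (a ^ p * x) = a * \<psi> x" by simp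
  next
    have "(1::'a) = 1 ^ p + 0" by simp
    then show "\<psi> 1 = 1" using psi_eq sub_zero[OF M(1)] by blast
  next
    show "(0::real) < 1" by simp
  next
    fix x :: 'a
    obtain c hx where hx: "hx \<in> M" "x = c ^ p + hx" using rep by blast
    have cx: "\<psi> x = c" using psi_eq hx by blast
    have m: "- hx \<in> M" by (rule sub_neg[OF M(1) hx(1) ch pr])
    have "v c ^ p \<le> v (c ^ p - - hx)" by (rule orth_scaled[OF nv M m])
    then show "v (\<psi> x) ^ p \<le> 1 * v x" using hx cx by simp
  qed
  then show ?thesis by blast
qed

lemma psi_sc:
  fixes v :: "'a::field \<Rightarrow> real"
  assumes nv: "nonarch_abs v" and sc: "spherically_complete v" and ch: "CHAR('a) = p" and pr: "prime p"
  shows "\<exists>\<psi> K. good_psi v p \<psi> K"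
proof -
  obtain M where M: "rp_subspace p M" "orth v M" "\<forall>X. rp_subspace p X \<and> orth v X \<and> M \<subseteq> X \<longrightarrow> X = M"
    using maximal_orth_exists[OF nv] by blast
  have "\<forall>x. \<exists>c h. h \<in> M \<and> x = c ^ p + h"
    using sc_repr[OF nv sc ch pr M] by blast
  then show ?thesis using psi_from_orth[OF nv ch pr M(1,2)] by blast
qed


definition conv :: "('a::field \<Rightarrow> real) \<Rightarrow> (nat \<Rightarrow> 'a) \<Rightarrow> 'a \<Rightarrow> bool" where
  "conv v s z \<longleftrightarrow> (\<forall>e>0. \<exists>N. \<forall>n\<ge>N. v (s n - z) < e)"

definition cauchy :: "('a::field \<Rightarrow> real) \<Rightarrow> (nat \<Rightarrow> 'a) \<Rightarrow> bool" where
  "cauchy v s \<longleftrightarrow> (\<forall>e>0. \<exists>N. \<forall>m\<ge>N. \<forall>n\<ge>N. v (s m - s n) < e)"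

context
  fixes v :: "'a::field \<Rightarrow> real"
  assumes nv: "nonarch_abs v"
begin

lemma conv_unique: "conv v s a \<Longrightarrow> conv v s b \<Longrightarrow> a = b"
proof (rule ccontr)
  assume ca: "conv v s a" and cb: "conv v s b" and ne: "a \<noteq> b"
  then have e: "v (a - b) > 0" using v_pos[OF nv] by simp
  obtain N1 where N1: "\<forall>n\<ge>N1. v (s n - a) < v (a - b)" using ca e unfolding conv_def by blast
  obtain N2 where N2: "\<forall>n\<ge>N2. v (s n - b) < v (a - b)" using cb e unfolding conv_def by blast
  define n where "n = max N1 N2"
  have "v (a - b) \<le> max (v (a - s n)) (v (s n - b))" by (rule v_trans3[OF nv])
  moreover have "v (a - s n) < v (a - b)" using N1 v_diff_comm[OF nv, of a "s n"] by (simp add: n_def)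
  moreover have "v (s n - b) < v (a - b)" using N2 by (simp add: n_def)
  ultimately show False by simp
qed

lemma conv_cauchy: "conv v s a \<Longrightarrow> cauchy v s"
  unfolding cauchy_def
proof (intro allI impI)
  fix e :: real assume "conv v s a" "e > 0"
  then obtain N where N: "\<forall>n\<ge>N. v (s n - a) < e" unfolding conv_def by blast
  show "\<exists>N. \<forall>m\<ge>N. \<forall>n\<ge>N. v (s m - s n) < e"
  proof (intro exI allI impI)
    fix m n assume "N \<le> m" "N \<le> n"
    have "v (s m - s n) \<le> max (v (s m - a)) (v (a - s n))" by (rule v_trans3[OF nv])
    moreover have "v (a - s n) = v (s n - a)" by (rule v_diff_comm[OF nv])
    moreover have "v (s m - a) < e" "v (s n - a) < e" using N \<open>N \<le> m\<close> \<open>N \<le> n\<close> by auto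
    ultimately show "v (s m - s n) < e" by (simp add: max_less_iff_conj)
  qed
qed

lemma cauchy_conv: "abs_complete v \<Longrightarrow> cauchy v s \<Longrightarrow> \<exists>l. conv v s l"
  unfolding abs_complete_def cauchy_def conv_def by blast

lemma conv_add: "conv v s a \<Longrightarrow> conv v t b \<Longrightarrow> conv v (\<lambda>n. s n + t n) (a + b)"
  unfolding conv_def
proof (intro allI impI)
  fix e :: real assume cs: "\<forall>e>0. \<exists>N. \<forall>n\<ge>N. v (s n - a) < e" and ct: "\<forall>e>0. \<exists>N. \<forall>n\<ge>N. v (t n - b) < e"
    and e: "e > 0"
  obtain N1 where N1: "\<forall>n\<ge>N1. v (s n - a) < e" using cs e by blast
  obtain N2 where N2: "\<forall>n\<ge>N2. v (t n - b) < e" using ct e by blast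
  show "\<exists>N. \<forall>n\<ge>N. v (s n + t n - (a + b)) < e"
  proof (intro exI allI impI)
    fix n assume n: "max N1 N2 \<le> n"
    have "s n + t n - (a + b) = (s n - a) + (t n - b)" by simp
    then have "v (s n + t n - (a + b)) \<le> max (v (s n - a)) (v (t n - b))" using v_add[OF nv] by metis
    moreover have "v (s n - a) < e" "v (t n - b) < e" using N1 N2 n by auto
    ultimately show "v (s n + t n - (a + b)) < e" by (simp add: max_less_iff_conj)
  qed
qed

lemma conv_const: "conv v (\<lambda>n. a) a"
  unfolding conv_def using v_0[OF nv] by simp

lemma conv_mult: "conv v s a \<Longrightarrow> conv v (\<lambda>n. c * s n) (c * a)"
proof (cases "c = 0")
  case True then show ?thesis using conv_const[of 0] by simp
next
  case False
  assume cs: "conv v s a"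
  have vc: "v c > 0" using v_pos[OF nv False] .
  show ?thesis unfolding conv_def
  proof (intro allI impI)
    fix e :: real assume e: "e > 0"
    obtain N where N: "\<forall>n\<ge>N. v (s n - a) < e / v c" using cs e vc unfolding conv_def
      by (meson divide_pos_pos)
    show "\<exists>N. \<forall>n\<ge>N. v (c * s n - c * a) < e"
    proof (intro exI allI impI)
      fix n assume "N \<le> n"
      have "v (c * s n - c * a) = v c * v (s n - a)"
        by (simp add: v_mult[OF nv, symmetric] right_diff_distrib)
      also have "\<dots> < v c * (e / v c)" using N \<open>N \<le> n\<close> vc by (intro mult_strict_left_mono) auto
      also have "\<dots> = e" using vc by simp
      finally show "v (c * s n - c * a) < e" .
    qed
  qed
qed

lemma conv_iff0: "conv v s a \<longleftrightarrow> conv v (\<lambda>n. s n - a) 0"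
  unfolding conv_def by simp

lemma conv_diff: "conv v s a \<Longrightarrow> conv v t b \<Longrightarrow> conv v (\<lambda>n. s n - t n) (a - b)"
  using conv_add[of s a "\<lambda>n. - t n" "- b"] conv_mult[of t b "-1"] by simp

lemma conv_pow_bound:
  assumes p0: "p > 0" and K: "K > 0" and bd: "\<forall>n. v (s n) ^ p \<le> K * v (t n)" and ct: "conv v t 0"
  shows "conv v s 0"
  unfolding conv_def
proof (intro allI impI)
  fix e :: real assume e: "e > 0"
  have "e ^ p / K > 0" using e K by simp
  then obtain N where N: "\<forall>n\<ge>N. v (t n) < e ^ p / K" using ct unfolding conv_def by auto
  show "\<exists>N. \<forall>n\<ge>N. v (s n - 0) < e"
  proof (intro exI allI impI)
    fix n assume "N \<le> n"
    then have "v (s n) ^ p < e ^ p" using bd N K by (smt (verit, best) mult.commute pos_less_divide_eq)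
    then have "v (s n) < e" by (rule power_less_imp_less_base) (use e in simp)
    then show "v (s n - 0) < e" by simp
  qed
qed

lemma cauchy_pow_bound:
  assumes p0: "p > 0" and K: "K > 0" and bd: "\<forall>m n. v (s m - s n) ^ p \<le> K * v (t m - t n)" and ct: "cauchy v t"
  shows "cauchy v s"
  unfolding cauchy_def
proof (intro allI impI)
  fix e :: real assume e: "e > 0"
  have "e ^ p / K > 0" using e K by simp
  then obtain N where N: "\<forall>m\<ge>N. \<forall>n\<ge>N. v (t m - t n) < e ^ p / K" using ct unfolding cauchy_def by auto
  show "\<exists>N. \<forall>m\<ge>N. \<forall>n\<ge>N. v (s m - s n) < e"
  proof (intro exI allI impI)
    fix m n assume "N \<le> m" "N \<le> n"
    then have "v (s m - s n) ^ p < e ^ p" using bd N K by (smt (verit, best) mult.commute pos_less_divide_eq)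
    then show "v (s m - s n) < e" by (rule power_less_imp_less_base) (use e in simp)
  qed
qed

end


lemma extend_psi:
  fixes v :: "'a::field \<Rightarrow> real" and G :: "'a set" and g :: "'a \<Rightarrow> 'a"
  assumes nv: "nonarch_abs v" and cp: "abs_complete v" and p0: "p > 0"
    and Gadd: "\<forall>x\<in>G. \<forall>y\<in>G. x + y \<in> G" and Gneg: "\<forall>x\<in>G. - x \<in> G"
    and Gsm: "\<forall>b. \<forall>x\<in>G. b ^ p * x \<in> G" and G1: "1 \<in> G"
    and gadd: "\<forall>x\<in>G. \<forall>y\<in>G. g (x + y) = g x + g y" and gneg: "\<forall>x\<in>G. g (- x) = - g x"
    and gsm: "\<forall>b. \<forall>x\<in>G. g (b ^ p * x) = b * g x" and g1: "g 1 = 1"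
    and K: "K > 0" and gbd: "\<forall>x\<in>G. v (g x) ^ p \<le> K * v x"
    and dense: "\<forall>x e. e > 0 \<longrightarrow> (\<exists>y\<in>G. v (x - y) < e)"
  shows "\<exists>\<psi>. good_psi v p \<psi> K"
proof -
  have Gsub: "x - y \<in> G" if "x \<in> G" "y \<in> G" for x y
    using Gadd Gneg that by (metis diff_conv_add_uminus)
  have gsub: "g (x - y) = g x - g y" if "x \<in> G" "y \<in> G" for x y
    using gadd gneg Gneg that by (metis diff_conv_add_uminus)
  have seq_ex: "\<exists>y. (\<forall>m. y m \<in> G) \<and> conv v y x" for x
  proof -
    have "\<forall>m. \<exists>y. y \<in> G \<and> v (x - y) < 1 / real (Suc m)"
    proof
      fix m
      have "(1::real) / real (Suc m) > 0" by simp
      then show "\<exists>y. y \<in> G \<and> v (x - y) < 1 / real (Suc m)" using dense by blast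
    qed
    then obtain y where y: "\<forall>m. y m \<in> G \<and> v (x - y m) < 1 / real (Suc m)" by metis
    have "conv v y x" unfolding conv_def
    proof (intro allI impI)
      fix e :: real assume e: "e > 0"
      obtain N where N: "1 / real (Suc N) < e" using e reals_Archimedean by (metis inverse_eq_divide of_nat_Suc)
      show "\<exists>N. \<forall>n\<ge>N. v (y n - x) < e"
      proof (intro exI allI impI)
        fix n assume "N \<le> n"
        then have "1 / real (Suc n) \<le> 1 / real (Suc N)" by (simp add: frac_le)
        then show "v (y n - x) < e" using y N v_diff_comm[OF nv, of "y n" x] by (smt (verit))
      qed
    qed
    then show ?thesis using y by blast
  qed
  have lim_ex: "\<exists>l. \<forall>y. (\<forall>m. y m \<in> G) \<and> conv v y x \<longrightarrow> conv v (\<lambda>m. g (y m)) l" for x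
  proof -
    obtain y0 where y0: "\<forall>m. y0 m \<in> G" "conv v y0 x" using seq_ex by blast
    have "cauchy v (\<lambda>m. g (y0 m))"
    proof (rule cauchy_pow_bound[OF nv p0 K])
      show "\<forall>m n. v (g (y0 m) - g (y0 n)) ^ p \<le> K * v (y0 m - y0 n)"
        using gsub gbd Gsub y0(1) by metis
      show "cauchy v y0" by (rule conv_cauchy[OF nv y0(2)])
    qed
    then obtain l where l: "conv v (\<lambda>m. g (y0 m)) l" using cauchy_conv[OF nv cp] by blast
    have "conv v (\<lambda>m. g (y m)) l" if y: "\<forall>m. y m \<in> G" "conv v y x" for y
    proof -
      have "conv v (\<lambda>m. y m - y0 m) (x - x)" by (rule conv_diff[OF nv y(2) y0(2)])
      then have d0: "conv v (\<lambda>m. y m - y0 m) 0" by simp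
      have "conv v (\<lambda>m. g (y m) - g (y0 m)) 0"
      proof (rule conv_pow_bound[OF nv p0 K _ d0])
        show "\<forall>n. v (g (y n) - g (y0 n)) ^ p \<le> K * v (y n - y0 n)"
          using gsub gbd Gsub y(1) y0(1) by metis
      qed
      from conv_add[OF nv this l] show ?thesis by simp
    qed
    then show ?thesis by blast
  qed
  define \<psi> where "\<psi> = (\<lambda>x. SOME l. \<forall>y. (\<forall>m. y m \<in> G) \<and> conv v y x \<longrightarrow> conv v (\<lambda>m. g (y m)) l)"
  have P: "conv v (\<lambda>m. g (y m)) (\<psi> x)" if "\<forall>m. y m \<in> G" "conv v y x" for x y
  proof -
    have "\<forall>y. (\<forall>m. y m \<in> G) \<and> conv v y x \<longrightarrow> conv v (\<lambda>m. g (y m)) (\<psi> x)"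
      unfolding \<psi>_def by (rule someI_ex[OF lim_ex])
    then show ?thesis using that by blast
  qed
  have padd: "\<psi> (x + x') = \<psi> x + \<psi> x'" for x x'
  proof -
    obtain y where y: "\<forall>m. y m \<in> G" "conv v y x" using seq_ex by blast
    obtain y' where y': "\<forall>m. y' m \<in> G" "conv v y' x'" using seq_ex by blast
    have s: "\<forall>m. y m + y' m \<in> G" using y y' Gadd by blast
    have c: "conv v (\<lambda>m. y m + y' m) (x + x')" by (rule conv_add[OF nv y(2) y'(2)])
    have "conv v (\<lambda>m. g (y m + y' m)) (\<psi> (x + x'))" by (rule P[OF s c])
    moreover have "conv v (\<lambda>m. g (y m + y' m)) (\<psi> x + \<psi> x')"
      using conv_add[OF nv P[OF y] P[OF y']] gadd y(1) y'(1) by simp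
    ultimately show ?thesis by (rule conv_unique[OF nv])
  qed
  have psm: "\<psi> (b ^ p * x) = b * \<psi> x" for b x
  proof -
    obtain y where y: "\<forall>m. y m \<in> G" "conv v y x" using seq_ex by blast
    have s: "\<forall>m. b ^ p * y m \<in> G" using y Gsm by blast
    have c: "conv v (\<lambda>m. b ^ p * y m) (b ^ p * x)" by (rule conv_mult[OF nv y(2)])
    have "conv v (\<lambda>m. g (b ^ p * y m)) (\<psi> (b ^ p * x))" by (rule P[OF s c])
    moreover have "conv v (\<lambda>m. g (b ^ p * y m)) (b * \<psi> x)"
      using conv_mult[OF nv P[OF y], of b] gsm y(1) by simp
    ultimately show ?thesis by (rule conv_unique[OF nv])
  qed
  have p1: "\<psi> 1 = 1"
  proof -
    have "conv v (\<lambda>m. g 1) (\<psi> 1)" using P[of "\<lambda>m. 1" 1] G1 conv_const[OF nv] by simp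
    moreover have "conv v (\<lambda>m. g 1) 1" using conv_const[OF nv] g1 by simp
    ultimately show ?thesis by (rule conv_unique[OF nv])
  qed
  have p00: "\<psi> 0 = 0"
  proof -
    have "\<psi> 0 = \<psi> 0 + \<psi> 0" using padd[of 0 0] by simp
    then show ?thesis by (rule self_add_zero)
  qed
  have pbd: "v (\<psi> x) ^ p \<le> K * v x" for x
  proof (cases "\<psi> x = 0")
    case True
    then show ?thesis using p0 K v_0[OF nv] v_nonneg[OF nv, of x] by (simp add: power_0_left)
  next
    case False
    then have x0: "x \<noteq> 0" using p00 by auto
    have vp: "v (\<psi> x) > 0" using v_pos[OF nv False] .
    have vx: "v x > 0" using v_pos[OF nv x0] .
    obtain y where y: "\<forall>m. y m \<in> G" "conv v y x" using seq_ex by blast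
    obtain N1 where N1: "\<forall>m\<ge>N1. v (g (y m) - \<psi> x) < v (\<psi> x)" using P[OF y] vp unfolding conv_def by blast
    obtain N2 where N2: "\<forall>m\<ge>N2. v (y m - x) < v x" using y(2) vx unfolding conv_def by blast
    define m where "m = max N1 N2"
    have "v (\<psi> x + (g (y m) - \<psi> x)) = v (\<psi> x)" by (rule v_iso[OF nv]) (use N1 in \<open>simp add: m_def\<close>)
    then have e1: "v (g (y m)) = v (\<psi> x)" by simp
    have "v (x + (y m - x)) = v x" by (rule v_iso[OF nv]) (use N2 in \<open>simp add: m_def\<close>)
    then have e2: "v (y m) = v x" by simp
    show ?thesis using gbd y(1) e1 e2 by metis
  qed
  have "good_psi v p \<psi> K" unfolding good_psi_def using padd psm p1 K pbd by blast
  then show ?thesis by blast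
qed


definition DH :: "nat \<Rightarrow> 'a::field set \<Rightarrow> 'a set" where
  "DH p H = {c ^ p + h | c h. h \<in> H}"

definition closedS :: "('a::field \<Rightarrow> real) \<Rightarrow> 'a set \<Rightarrow> bool" where
  "closedS v S \<longleftrightarrow> (\<forall>s z. (\<forall>n. s n \<in> S) \<and> conv v s z \<longrightarrow> z \<in> S)"

context
  fixes p :: nat and H :: "'a::field set"
  assumes H: "rp_subspace p H" and ch: "CHAR('a) = p" and pr: "prime p"
begin

lemma DH_add: "y \<in> DH p H \<Longrightarrow> y' \<in> DH p H \<Longrightarrow> y + y' \<in> DH p H"
proof -
  assume "y \<in> DH p H" "y' \<in> DH p H"
  then obtain c h c' h' where "y = c ^ p + h" "y' = c' ^ p + h'" "h \<in> H" "h' \<in> H" by (auto simp: DH_def)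
  moreover have "(c + c') ^ p = c ^ p + c' ^ p" by (rule frob_add[OF ch pr])
  ultimately have "y + y' = (c + c') ^ p + (h + h')" "h + h' \<in> H" using sub_add[OF H] by (auto simp: algebra_simps)
  then show ?thesis unfolding DH_def by blast
qed

lemma DH_sm: "y \<in> DH p H \<Longrightarrow> b ^ p * y \<in> DH p H"
proof -
  assume "y \<in> DH p H"
  then obtain c h where "y = c ^ p + h" "h \<in> H" by (auto simp: DH_def)
  then have "b ^ p * y = (b * c) ^ p + b ^ p * h" "b ^ p * h \<in> H"
    using sub_smul[OF H] by (auto simp: algebra_simps power_mult_distrib)
  then show ?thesis unfolding DH_def by blast
qed

lemma DH_neg: "y \<in> DH p H \<Longrightarrow> - y \<in> DH p H"
proof -
  assume y: "y \<in> DH p H"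
  have "(-1::'a) ^ p = - (1 ^ p)" by (rule minus_power_prime_CHAR) (use ch pr in auto)
  then have "- y = (-1) ^ p * y" by simp
  then show ?thesis using DH_sm[OF y, of "-1"] by simp
qed

lemma DH_diff: "y \<in> DH p H \<Longrightarrow> y' \<in> DH p H \<Longrightarrow> y - y' \<in> DH p H"
  using DH_add[of y "- y'"] DH_neg[of y'] by simp

lemma DH_one: "1 \<in> DH p H"
proof -
  have "(1::'a) = 1 ^ p + 0" by simp
  then show ?thesis unfolding DH_def using sub_zero[OF H] by blast
qed

lemma DH_zero: "0 \<in> DH p H"
proof -
  have p0: "p > 0" using pr prime_gt_0_nat by blast
  have "(0::'a) = 0 ^ p + 0" using p0 by (simp add: power_0_left)
  then show ?thesis unfolding DH_def using sub_zero[OF H] by blast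
qed

lemma H_DH: "h \<in> H \<Longrightarrow> h \<in> DH p H"
proof -
  have p0: "p > 0" using pr prime_gt_0_nat by blast
  assume "h \<in> H"
  moreover have "h = 0 ^ p + h" using p0 by (simp add: power_0_left)
  ultimately show ?thesis unfolding DH_def by blast
qed

end

lemma DH_mono: "H \<subseteq> H' \<Longrightarrow> DH p H \<subseteq> DH p H'"
  unfolding DH_def by blast

lemma conv_pow1:
  fixes v :: "'a::field \<Rightarrow> real"
  assumes nv: "nonarch_abs v" and p0: "p > 0" and c: "conv v t 0"
  shows "conv v (\<lambda>n. t n ^ p) 0"
  unfolding conv_def
proof (intro allI impI)
  fix e :: real assume e: "e > 0"
  obtain N where N: "\<forall>n\<ge>N. v (t n) < min e 1" using c e unfolding conv_def by (metis diff_zero min_less_iff_conj zero_less_one)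
  show "\<exists>N. \<forall>n\<ge>N. v (t n ^ p - 0) < e"
  proof (intro exI allI impI)
    fix n assume "N \<le> n"
    then have a: "v (t n) < e" "v (t n) < 1" using N by auto
    have "v (t n) ^ p \<le> v (t n) ^ 1"
      by (rule power_decreasing) (use p0 a v_nonneg[OF nv] in auto)
    then show "v (t n ^ p - 0) < e" using a by (simp add: v_power[OF nv])
  qed
qed

lemma closed_base:
  fixes v :: "'a::field \<Rightarrow> real"
  assumes nv: "nonarch_abs v" and cp: "abs_complete v" and ch: "CHAR('a) = p" and pr: "prime p"
  shows "closedS v (DH p {0})"
  unfolding closedS_def
proof (intro allI impI)
  fix s z assume a: "(\<forall>n. s n \<in> DH p {0}) \<and> conv v s z"
  have p0: "p > 0" using pr prime_gt_0_nat by blast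
  have "\<forall>n. \<exists>c. s n = c ^ p" using a by (auto simp: DH_def)
  then obtain c where c: "\<forall>n. s n = c n ^ p" by metis
  have "cauchy v c"
  proof (rule cauchy_pow_bound[OF nv p0, of 1])
    show "\<forall>m n. v (c m - c n) ^ p \<le> 1 * v (s m - s n)"
    proof (intro allI)
      fix m n
      have "s m - s n = (c m - c n) ^ p" using c frob_diff[OF ch pr, of "c m" "c n"] by simp
      then show "v (c m - c n) ^ p \<le> 1 * v (s m - s n)" by (simp add: v_power[OF nv])
    qed
    show "cauchy v s" using conv_cauchy[OF nv] a by blast
  qed simp
  then obtain c0 where c0: "conv v c c0" using cauchy_conv[OF nv cp] by blast
  then have "conv v (\<lambda>n. c n - c0) 0" using conv_iff0[OF nv] by blast
  then have "conv v (\<lambda>n. (c n - c0) ^ p) 0" by (rule conv_pow1[OF nv p0])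
  then have "conv v (\<lambda>n. s n - c0 ^ p) 0" using c frob_diff[OF ch pr] by simp
  then have "conv v s (c0 ^ p)" using conv_iff0[OF nv] by blast
  then have "z = c0 ^ p" using conv_unique[OF nv] a by blast
  then show "z \<in> DH p {0}" unfolding DH_def by auto
qed

lemma dist_pos:
  fixes v :: "'a::field \<Rightarrow> real"
  assumes nv: "nonarch_abs v" and cl: "closedS v S" and bS: "b \<notin> S" and ne: "S \<noteq> {}"
  shows "\<exists>d>0. (\<forall>y\<in>S. d \<le> v (b - y)) \<and> (\<forall>t>d. \<exists>y\<in>S. v (b - y) < t)"
proof -
  define d where "d = Inf ((\<lambda>y. v (b - y)) ` S)"
  have bdd: "bdd_below ((\<lambda>y. v (b - y)) ` S)"
    by (rule bdd_belowI[of _ 0]) (auto simp: v_nonneg[OF nv])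
  have ne': "(\<lambda>y. v (b - y)) ` S \<noteq> {}" using ne by simp
  have low: "\<forall>y\<in>S. d \<le> v (b - y)" unfolding d_def using bdd by (auto intro: cInf_lower)
  have near: "\<forall>t>d. \<exists>y\<in>S. v (b - y) < t" unfolding d_def using cInf_less_iff[OF ne' bdd] by auto
  have d0: "d \<ge> 0" unfolding d_def using ne' by (rule cInf_greatest) (auto simp: v_nonneg[OF nv])
  have "d \<noteq> 0"
  proof
    assume "d = 0"
    then have "\<forall>m. \<exists>y. y \<in> S \<and> v (b - y) < 1 / real (Suc m)"
    proof (intro allI)
      fix m
      have "(1::real) / real (Suc m) > 0" by simp
      then show "\<exists>y. y \<in> S \<and> v (b - y) < 1 / real (Suc m)" using near \<open>d = 0\<close> by blast
    qed
    then obtain y where y: "\<forall>m. y m \<in> S \<and> v (b - y m) < 1 / real (Suc m)" by metis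
    have "conv v y b" unfolding conv_def
    proof (intro allI impI)
      fix e :: real assume e: "e > 0"
      obtain N where N: "1 / real (Suc N) < e" using e reals_Archimedean by (metis inverse_eq_divide of_nat_Suc)
      show "\<exists>N. \<forall>n\<ge>N. v (y n - b) < e"
      proof (intro exI allI impI)
        fix n assume "N \<le> n"
        then have "1 / real (Suc n) \<le> 1 / real (Suc N)" by (simp add: frac_le)
        then show "v (y n - b) < e" using y N v_diff_comm[OF nv, of "y n" b] by (smt (verit))
      qed
    qed
    then have "b \<in> S" using cl y unfolding closedS_def by blast
    with bS show False by simp
  qed
  then show ?thesis using d0 low near by (intro exI[of _ d]) auto
qed

lemma orthg_scaled:
  fixes v :: "'a::field \<Rightarrow> real"
  assumes nv: "nonarch_abs v" and H: "rp_subspace p H" and o: "\<forall>h\<in>H. \<gamma> \<le> v (1 - h)"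
    and g0: "\<gamma> \<ge> 0" and p0: "p > 0" and g: "g \<in> H"
  shows "\<gamma> * v t ^ p \<le> v (t ^ p - g)"
proof (cases "t = 0")
  case True
  then show ?thesis using p0 v_nonneg[OF nv] v_0[OF nv] by (simp add: power_0_left)
next
  case False
  define g' where "g' = inverse t ^ p * g"
  have g': "g' \<in> H" unfolding g'_def by (rule sub_smul[OF H g])
  have "t ^ p - g = t ^ p * (1 - g')" using False by (simp add: g'_def field_simps power_inverse)
  then have "v (t ^ p - g) = v t ^ p * v (1 - g')" by (simp add: v_mult[OF nv] v_power[OF nv])
  moreover have "\<gamma> \<le> v (1 - g')" using o g' by simp
  moreover have "0 \<le> v t ^ p" using v_nonneg[OF nv] by simp
  ultimately show ?thesis by (metis mult.commute mult_left_mono)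
qed


definition gam :: "nat \<Rightarrow> real" where "gam n = 1/2 + (1/2) ^ Suc n"

lemma gam_pos: "gam n > 1/2" by (simp add: gam_def)
lemma gam_dec: "gam (Suc n) < gam n" by (simp add: gam_def)
lemma gam_0: "gam 0 = 1" by (simp add: gam_def)

definition Inv :: "('a::field \<Rightarrow> real) \<Rightarrow> nat \<Rightarrow> (nat \<Rightarrow> 'a) \<Rightarrow> nat \<Rightarrow> 'a set \<Rightarrow> bool" where
  "Inv v p b n H \<longleftrightarrow> rp_subspace p H \<and> (\<forall>h\<in>H. gam n \<le> v (1 - h)) \<and> closedS v (DH p H) \<and> (\<forall>m<n. b m \<in> DH p H)"

lemma Inv_0:
  fixes v :: "'a::field \<Rightarrow> real"
  assumes nv: "nonarch_abs v" and cp: "abs_complete v" and ch: "CHAR('a) = p" and pr: "prime p"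
  shows "Inv v p b 0 {0}"
  unfolding Inv_def
proof (intro conjI)
  show "rp_subspace p {0::'a}" by (simp add: rp_subspace_def rp_smul_def)
  show "\<forall>h\<in>{0}. gam 0 \<le> v (1 - h)" by (simp add: gam_0 v_1[OF nv])
  show "closedS v (DH p {0})" by (rule closed_base[OF nv cp ch pr])
  show "\<forall>m<0. b m \<in> DH p {0}" by simp
qed

lemma step_new:
  fixes v :: "'a::field \<Rightarrow> real"
  assumes nv: "nonarch_abs v" and cp: "abs_complete v" and ch: "CHAR('a) = p" and pr: "prime p"
    and I: "Inv v p b n H" and nb: "b n \<notin> DH p H"
  shows "\<exists>H'. Inv v p b (Suc n) H' \<and> H \<subseteq> H'"
proof -
  have p0: "p > 0" using pr prime_gt_0_nat by blast
  have H: "rp_subspace p H" and o: "\<forall>h\<in>H. gam n \<le> v (1 - h)" and cl: "closedS v (DH p H)"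
    and bm: "\<forall>m<n. b m \<in> DH p H" using I by (auto simp: Inv_def)
  define S where "S = DH p H"
  have Sne: "S \<noteq> {}" using DH_zero[OF H ch pr] by (auto simp: S_def)
  obtain d where d: "d > 0" "\<forall>y\<in>S. d \<le> v (b n - y)" "\<forall>t>d. \<exists>y\<in>S. v (b n - y) < t"
    using dist_pos[OF nv cl[folded S_def] nb[folded S_def] Sne] by blast
  define \<tau> where "\<tau> = gam (Suc n) / gam n"
  have gn: "gam n > 0" using gam_pos[of n] by simp
  have tau0: "\<tau> > 0" using gam_pos[of "Suc n"] gn by (simp add: \<tau>_def)
  have tau1: "\<tau> < 1" using gam_dec[of n] gn by (simp add: \<tau>_def)
  have gS: "gam (Suc n) = \<tau> * gam n" using gn by (simp add: \<tau>_def)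
  have "d / \<tau> > d" using d(1) tau0 tau1 by (simp add: less_divide_eq)
  then obtain y0 where y0: "y0 \<in> S" "v (b n - y0) < d / \<tau>" using d(3) by blast
  then obtain s h0 where sh0: "y0 = s ^ p + h0" "h0 \<in> H" by (auto simp: S_def DH_def)
  define e where "e = b n - y0"
  define H' where "H' = {h + c ^ p * e | h c. h \<in> H}"
  have subH': "rp_subspace p H'"
    unfolding rp_subspace_def rp_smul_def
  proof (intro conjI ballI allI)
    have "(0::'a) = 0 + 0 ^ p * e" using p0 by (simp add: power_0_left)
    then show "0 \<in> H'" unfolding H'_def using sub_zero[OF H] by blast
  next
    fix y z assume "y \<in> H'" "z \<in> H'"
    then obtain h1 b1 h2 b2 where "y = h1 + b1 ^ p * e" "z = h2 + b2 ^ p * e" "h1 \<in> H" "h2 \<in> H"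
      by (auto simp: H'_def)
    moreover have "(b1 + b2) ^ p = b1 ^ p + b2 ^ p" by (rule frob_add[OF ch pr])
    ultimately have "y + z = (h1 + h2) + (b1 + b2) ^ p * e" "h1 + h2 \<in> H"
      using sub_add[OF H] by (auto simp: algebra_simps)
    then show "y + z \<in> H'" unfolding H'_def by blast
  next
    fix a y assume "y \<in> H'"
    then obtain h c where "y = h + c ^ p * e" "h \<in> H" by (auto simp: H'_def)
    then have "a ^ p * y = a ^ p * h + (a * c) ^ p * e" "a ^ p * h \<in> H"
      using sub_smul[OF H] by (auto simp: algebra_simps power_mult_distrib)
    then show "a ^ p * y \<in> H'" unfolding H'_def by blast
  qed
  have HH': "H \<subseteq> H'"
  proof
    fix h assume "h \<in> H"
    moreover have "h = h + 0 ^ p * e" using p0 by (simp add: power_0_left)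
    ultimately show "h \<in> H'" unfolding H'_def by blast
  qed
  have oH': "\<forall>y\<in>H'. gam (Suc n) \<le> v (1 - y)"
  proof
    fix y assume "y \<in> H'"
    then obtain h c where y: "y = h + c ^ p * e" "h \<in> H" by (auto simp: H'_def)
    show "gam (Suc n) \<le> v (1 - y)"
    proof (cases "c = 0")
      case True
      then show ?thesis using y o gam_dec[of n] p0 by (auto simp: power_0_left)
    next
      case False
      define t where "t = inverse c"
      define g where "g = t ^ p * h"
      have g: "g \<in> H" unfolding g_def by (rule sub_smul[OF H y(2)])
      define y1 where "y1 = t ^ p - g + y0"
      have y1S: "y1 \<in> S"
      proof -
        have "y1 = (t + s) ^ p + (h0 - g)" using frob_add[OF ch pr, of t s] sh0 by (simp add: y1_def algebra_simps)
        moreover have "h0 - g \<in> H" by (rule sub_diff[OF H sh0(2) g ch pr])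
        ultimately show ?thesis by (auto simp: S_def DH_def)
      qed
      define X where "X = v (b n - y1)"
      have Xd: "d \<le> X" using d(2) y1S by (simp add: X_def)
      have X0: "0 \<le> X" using d(1) Xd by simp
      have "t ^ p - g = (y1 - b n) + (b n - y0)" by (simp add: y1_def)
      then have "v (t ^ p - g) \<le> max (v (y1 - b n)) (v (b n - y0))" using v_add[OF nv] by metis
      moreover have "v (y1 - b n) = X" by (simp add: X_def v_diff_comm[OF nv])
      moreover have "d / \<tau> \<le> X / \<tau>" using Xd tau0 by (simp add: divide_right_mono)
      moreover have "X \<le> X / \<tau>"
      proof -
        have "X * \<tau> \<le> X * 1" using X0 tau1 by (intro mult_left_mono) auto
        then show ?thesis using tau0 by (simp add: le_divide_eq)
      qed
      ultimately have up: "v (t ^ p - g) \<le> X / \<tau>" using y0(2) by simp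
      have "gam n * v t ^ p \<le> v (t ^ p - g)"
        by (rule orthg_scaled[OF nv H o _ p0 g]) (use gn in simp)
      then have "gam n * v t ^ p \<le> X / \<tau>" using up by simp
      then have lowX: "gam (Suc n) * v t ^ p \<le> X" using tau0 by (simp add: gS field_simps)
      have eq: "c ^ p * (y1 - b n) = 1 - y"
        using False unfolding y1_def g_def t_def y(1) e_def
        by (simp add: field_simps power_inverse)
      have yX: "v (y1 - b n) = X" unfolding X_def by (rule v_diff_comm[OF nv])
      have "v (1 - y) = v (c ^ p * (y1 - b n))" unfolding eq by simp
      also have "\<dots> = v c ^ p * X" unfolding v_mult[OF nv] v_power[OF nv] yX ..
      finally have "v (1 - y) = v c ^ p * X" .
      moreover have "v c ^ p * v t ^ p = 1"
      proof -
        have "c * t = 1" using False by (simp add: t_def)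
        then have "v c * v t = 1" using v_mult[OF nv, of c t] v_1[OF nv] by simp
        then show ?thesis by (simp add: power_mult_distrib[symmetric])
      qed
      moreover have "0 \<le> v c ^ p" using v_nonneg[OF nv] by simp
      ultimately show ?thesis using lowX mult_left_mono[OF lowX, of "v c ^ p"]
        by (simp add: mult_ac)
    qed
  qed
  have LB: "v a ^ p * d \<le> v (w + a ^ p * e)" if w: "w \<in> S" for w a
  proof (cases "a = 0")
    case True then show ?thesis using p0 v_nonneg[OF nv] v_0[OF nv] by (simp add: power_0_left)
  next
    case False
    have w': "y0 - inverse a ^ p * w \<in> S"
      unfolding S_def by (rule DH_diff[OF H ch pr]) (use y0(1) w DH_sm[OF H ch pr] in \<open>auto simp: S_def\<close>)
    have "w + a ^ p * e = a ^ p * (b n - (y0 - inverse a ^ p * w))"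
      using False by (simp add: e_def field_simps power_inverse)
    then have "v (w + a ^ p * e) = v a ^ p * v (b n - (y0 - inverse a ^ p * w))"
      by (simp add: v_mult[OF nv] v_power[OF nv])
    moreover have "d \<le> v (b n - (y0 - inverse a ^ p * w))" using d(2) w' by blast
    moreover have "0 \<le> v a ^ p" using v_nonneg[OF nv] by simp
    ultimately show ?thesis by (simp add: mult_left_mono)
  qed
  have clH': "closedS v (DH p H')"
    unfolding closedS_def
  proof (intro allI impI)
    fix zs z assume a: "(\<forall>m. zs m \<in> DH p H') \<and> conv v zs z"
    have "\<forall>m. \<exists>w a. w \<in> S \<and> zs m = w + a ^ p * e"
    proof
      fix m
      have "zs m \<in> DH p H'" using a by blast
      then obtain c h' where "zs m = c ^ p + h'" "h' \<in> H'" unfolding DH_def by blast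
      then obtain h a' where "zs m = c ^ p + (h + a' ^ p * e)" "h \<in> H" by (auto simp: H'_def)
      moreover have "c ^ p + h \<in> S" using \<open>h \<in> H\<close> by (auto simp: S_def DH_def)
      ultimately show "\<exists>w a. w \<in> S \<and> zs m = w + a ^ p * e" by (metis add.assoc)
    qed
    then obtain w a where wa: "\<forall>m. w m \<in> S \<and> zs m = w m + a m ^ p * e" by metis
    have "cauchy v a"
    proof (rule cauchy_pow_bound[OF nv p0, of "1 / d"])
      show "0 < 1 / d" using d(1) by simp
      show "cauchy v zs" using conv_cauchy[OF nv] a by blast
      show "\<forall>m n. v (a m - a n) ^ p \<le> 1 / d * v (zs m - zs n)"
      proof (intro allI)
        fix m k
        have ws: "w m - w k \<in> S" unfolding S_def by (rule DH_diff[OF H ch pr]) (use wa in \<open>auto simp: S_def\<close>)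
        have "zs m - zs k = (w m - w k) + (a m - a k) ^ p * e"
          unfolding frob_diff[OF ch pr] using wa by (simp add: algebra_simps)
        then have "v (a m - a k) ^ p * d \<le> v (zs m - zs k)" using LB[OF ws, of "a m - a k"] by simp
        then show "v (a m - a k) ^ p \<le> 1 / d * v (zs m - zs k)" using d(1) by (simp add: field_simps)
      qed
    qed
    then obtain a0 where a0: "conv v a a0" using cauchy_conv[OF nv cp] by blast
    have "conv v (\<lambda>m. (a m - a0) ^ p) 0" by (rule conv_pow1[OF nv p0]) (use a0 conv_iff0[OF nv] in blast)
    then have "conv v (\<lambda>m. e * (a m - a0) ^ p) (e * 0)" by (rule conv_mult[OF nv])
    then have "conv v (\<lambda>m. a m ^ p * e - a0 ^ p * e) 0"
      using frob_diff[OF ch pr] by (simp add: algebra_simps)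
    then have ce: "conv v (\<lambda>m. a m ^ p * e) (a0 ^ p * e)" using conv_iff0[OF nv] by blast
    have "conv v (\<lambda>m. zs m - a m ^ p * e) (z - a0 ^ p * e)" by (rule conv_diff[OF nv _ ce]) (use a in blast)
    then have "conv v w (z - a0 ^ p * e)" using wa by simp
    then have "z - a0 ^ p * e \<in> S" using cl wa unfolding closedS_def S_def by blast
    then obtain c h where ch': "z - a0 ^ p * e = c ^ p + h" "h \<in> H" by (auto simp: S_def DH_def)
    then have "z = c ^ p + (h + a0 ^ p * e)" by (simp add: algebra_simps)
    moreover have "h + a0 ^ p * e \<in> H'" using ch'(2) by (auto simp: H'_def)
    ultimately show "z \<in> DH p H'" by (auto simp: DH_def)
  qed
  have bH': "\<forall>m<Suc n. b m \<in> DH p H'"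
  proof (intro allI impI)
    fix m assume "m < Suc n"
    then consider "m < n" | "m = n" by linarith
    then show "b m \<in> DH p H'"
    proof cases
      case 1 then show ?thesis using bm DH_mono[OF HH'] by blast
    next
      case 2
      have "b n = s ^ p + (h0 + 1 ^ p * e)" using sh0 by (simp add: e_def)
      moreover have "h0 + 1 ^ p * e \<in> H'" using sh0(2) unfolding H'_def by blast
      ultimately show ?thesis using 2 by (auto simp: DH_def)
    qed
  qed
  have "Inv v p b (Suc n) H'" unfolding Inv_def using subH' oH' clH' bH' by blast
  then show ?thesis using HH' by blast
qed


lemma step_any:
  fixes v :: "'a::field \<Rightarrow> real"
  assumes nv: "nonarch_abs v" and cp: "abs_complete v" and ch: "CHAR('a) = p" and pr: "prime p"
    and I: "Inv v p b n H"
  shows "\<exists>H'. Inv v p b (Suc n) H' \<and> H \<subseteq> H'"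
proof (cases "b n \<in> DH p H")
  case True
  have "Inv v p b (Suc n) H"
    using I True gam_dec[of n] unfolding Inv_def by (auto simp: less_Suc_eq intro: order_trans)
  then show ?thesis by blast
next
  case False
  then show ?thesis by (rule step_new[OF nv cp ch pr I])
qed

lemma psi_ctbl:
  fixes v :: "'a::field \<Rightarrow> real"
  assumes nv: "nonarch_abs v" and cp: "abs_complete v" and ch: "CHAR('a) = p" and pr: "prime p"
    and cb: "rp_dense_countable_basis v p"
  shows "\<exists>\<psi> K. good_psi v p \<psi> K"
proof -
  have p0: "p > 0" using pr prime_gt_0_nat by blast
  obtain V B where V: "rp_subspace p V" "rp_dense v p V" "rp_basis p V B" "countable B"
    using cb unfolding rp_dense_countable_basis_def by blast
  define b where "b = (\<lambda>n. if B = {} then 0 else from_nat_into B n)"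
  define Hs where "Hs = rec_nat {0} (\<lambda>n H. SOME H'. Inv v p b (Suc n) H' \<and> H \<subseteq> H')"
  have Hs0: "Hs 0 = {0}" by (simp add: Hs_def)
  have HsS: "Hs (Suc n) = (SOME H'. Inv v p b (Suc n) H' \<and> Hs n \<subseteq> H')" for n by (simp add: Hs_def)
  have HsI0: "Inv v p b n (Hs n)" for n
  proof (induction n)
    case 0 then show ?case using Inv_0[OF nv cp ch pr] Hs0 by simp
  next
    case (Suc n)
    have "Inv v p b (Suc n) (Hs (Suc n)) \<and> Hs n \<subseteq> Hs (Suc n)"
      unfolding HsS by (rule someI_ex[OF step_any[OF nv cp ch pr Suc]])
    then show ?case by simp
  qed
  have HsI: "Inv v p b n (Hs n) \<and> Hs n \<subseteq> Hs (Suc n)" for n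
  proof -
    have "Inv v p b (Suc n) (Hs (Suc n)) \<and> Hs n \<subseteq> Hs (Suc n)"
      unfolding HsS by (rule someI_ex[OF step_any[OF nv cp ch pr HsI0]])
    then show ?thesis using HsI0 by simp
  qed
  have mono: "m \<le> n \<Longrightarrow> Hs m \<subseteq> Hs n" for m n
    by (rule lift_Suc_mono_le[of Hs]) (use HsI in auto)
  define Hi where "Hi = (\<Union>n. Hs n)"
  have Hsub: "rp_subspace p Hi"
    unfolding rp_subspace_def
  proof (intro conjI ballI allI)
    show "0 \<in> Hi" using Hs0 by (auto simp: Hi_def)
  next
    fix x y assume "x \<in> Hi" "y \<in> Hi"
    then obtain m n where "x \<in> Hs m" "y \<in> Hs n" by (auto simp: Hi_def)
    then have "x \<in> Hs (max m n)" "y \<in> Hs (max m n)" using mono[of m "max m n"] mono[of n "max m n"] by auto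
    moreover have "rp_subspace p (Hs (max m n))" using HsI by (simp add: Inv_def)
    ultimately have "x + y \<in> Hs (max m n)" using sub_add by blast
    then show "x + y \<in> Hi" by (auto simp: Hi_def)
  next
    fix a x assume "x \<in> Hi"
    then obtain n where "x \<in> Hs n" by (auto simp: Hi_def)
    moreover have "rp_subspace p (Hs n)" using HsI by (simp add: Inv_def)
    ultimately have "rp_smul p a x \<in> Hs n" unfolding rp_subspace_def by blast
    then show "rp_smul p a x \<in> Hi" by (auto simp: Hi_def)
  qed
  have Horth: "\<forall>h\<in>Hi. 1/2 \<le> v (1 - h)"
  proof
    fix h assume "h \<in> Hi"
    then obtain n where "h \<in> Hs n" by (auto simp: Hi_def)
    then have "gam n \<le> v (1 - h)" using HsI[of n] by (auto simp: Inv_def)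
    then show "1/2 \<le> v (1 - h)" using gam_pos[of n] by simp
  qed
  define G where "G = DH p Hi"
  have bG: "b m \<in> G" for m
  proof -
    have "b m \<in> DH p (Hs (Suc m))" using HsI[of "Suc m"] by (simp add: Inv_def)
    moreover have "Hs (Suc m) \<subseteq> Hi" by (auto simp: Hi_def)
    ultimately show ?thesis unfolding G_def using DH_mono by blast
  qed
  have BG: "B \<subseteq> G"
  proof
    fix x assume x: "x \<in> B"
    then obtain n where "from_nat_into B n = x" using from_nat_into_surj[OF V(4)] by blast
    then have "b n = x" using x by (auto simp: b_def)
    then show "x \<in> G" using bG by metis
  qed
  have sumG: "finite S \<Longrightarrow> S \<subseteq> B \<Longrightarrow> (\<Sum>y\<in>S. rp_smul p (c y) y) \<in> G" for S c
  proof (induction S rule: finite_induct)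
    case empty then show ?case using DH_zero[OF Hsub ch pr] by (simp add: G_def)
  next
    case (insert y S)
    then have "y \<in> G" using BG by blast
    then have "rp_smul p (c y) y \<in> G" unfolding rp_smul_def G_def by (rule DH_sm[OF Hsub ch pr])
    moreover have "(\<Sum>y\<in>S. rp_smul p (c y) y) \<in> G" using insert.IH insert.prems by simp
    ultimately have "rp_smul p (c y) y + (\<Sum>y\<in>S. rp_smul p (c y) y) \<in> G"
      using DH_add[OF Hsub ch pr] unfolding G_def by blast
    then show ?case using insert.hyps by simp
  qed
  have VG: "V \<subseteq> G"
  proof
    fix x assume "x \<in> V"
    moreover have "\<forall>x\<in>V. \<exists>S c. finite S \<and> S \<subseteq> B \<and> x = (\<Sum>b\<in>S. rp_smul p (c b) b)"
      using V(3) unfolding rp_basis_def by (elim conjE) assumption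
    ultimately obtain S c where "finite S" "S \<subseteq> B" "x = (\<Sum>y\<in>S. rp_smul p (c y) y)"
      by blast
    then show "x \<in> G" using sumG by blast
  qed
  have dense: "\<forall>x e. e > 0 \<longrightarrow> (\<exists>y\<in>G. v (x - y) < e)"
  proof (intro allI impI)
    fix x and e :: real assume e: "e > 0"
    then have "e powr (1 / real p) > 0" by simp
    then obtain y where y: "y \<in> V" "rp_norm v p (x - y) < e powr (1 / real p)"
      using V(2) unfolding rp_dense_def by blast
    have "v (x - y) < e"
    proof (rule ccontr)
      assume "\<not> v (x - y) < e"
      then have "e powr (1 / real p) \<le> v (x - y) powr (1 / real p)"
        by (intro powr_mono2) (use e in auto)
      then show False using y(2) by (simp add: rp_norm_def)
    qed
    then show "\<exists>y\<in>G. v (x - y) < e" using y(1) VG by blast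
  qed
  have uniq: "c = c'" if "h \<in> Hi" "h' \<in> Hi" "c ^ p + h = c' ^ p + h'" for c c' h h'
  proof -
    have d: "h' - h \<in> Hi" by (rule sub_diff[OF Hsub that(2,1) ch pr])
    have e1: "c ^ p - c' ^ p - (h' - h) = (c ^ p + h) - (c' ^ p + h')" by (simp add: algebra_simps)
    have "(c - c') ^ p = c ^ p - c' ^ p" by (rule frob_diff[OF ch pr])
    also have "\<dots> = h' - h" using e1 that(3) by simp
    finally have fe: "(c - c') ^ p = h' - h" .
    have "1/2 * v (c - c') ^ p \<le> v ((c - c') ^ p - (h' - h))"
      by (rule orthg_scaled[OF nv Hsub Horth _ p0 d]) simp
    then have "v (c - c') ^ p \<le> 0" using fe v_0[OF nv] by simp
    then have "v (c - c') = 0" using v_nonneg[OF nv, of "c - c'"]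
      by (metis antisym p0 power_eq_0_iff zero_le_power)
    then show ?thesis using v_zero_iff[OF nv] by simp
  qed
  define g where "g = (\<lambda>y. SOME c. \<exists>h\<in>Hi. y = c ^ p + h)"
  have g_eq: "g y = c" if "h \<in> Hi" "y = c ^ p + h" for y c h
  proof -
    have "\<exists>h\<in>Hi. y = g y ^ p + h" unfolding g_def by (rule someI_ex) (use that in blast)
    then obtain h' where "h' \<in> Hi" "y = g y ^ p + h'" by blast
    then show ?thesis using uniq[of h' h "g y" c] that by simp
  qed
  have Grep: "y \<in> G \<Longrightarrow> \<exists>c h. h \<in> Hi \<and> y = c ^ p + h" for y by (auto simp: G_def DH_def)
  have ex: "\<exists>\<psi>. good_psi v p \<psi> 2"
  proof (rule extend_psi[OF nv cp p0])
    show "\<forall>x\<in>G. \<forall>y\<in>G. x + y \<in> G" using DH_add[OF Hsub ch pr] by (simp add: G_def)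
    show "\<forall>x\<in>G. - x \<in> G" using DH_neg[OF Hsub ch pr] by (simp add: G_def)
    show "\<forall>b. \<forall>x\<in>G. b ^ p * x \<in> G" using DH_sm[OF Hsub ch pr] by (simp add: G_def)
    show "1 \<in> G" using DH_one[OF Hsub ch pr] by (simp add: G_def)
    show "\<forall>x\<in>G. \<forall>y\<in>G. g (x + y) = g x + g y"
    proof (intro ballI)
      fix x y assume "x \<in> G" "y \<in> G"
      then obtain c hx d hy where hx: "hx \<in> Hi" "x = c ^ p + hx" and hy: "hy \<in> Hi" "y = d ^ p + hy"
        using Grep by blast
      have "x + y = (c + d) ^ p + (hx + hy)"
        using hx hy frob_add[OF ch pr, of c d] by (simp add: algebra_simps)
      then have "g (x + y) = c + d" using g_eq sub_add[OF Hsub hx(1) hy(1)] by blast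
      moreover have "g x = c" "g y = d" using g_eq hx hy by blast+
      ultimately show "g (x + y) = g x + g y" by simp
    qed
    show "\<forall>x\<in>G. g (- x) = - g x"
    proof
      fix x assume "x \<in> G"
      then obtain c hx where hx: "hx \<in> Hi" "x = c ^ p + hx" using Grep by blast
      have "(- c) ^ p = - (c ^ p)" by (rule minus_power_prime_CHAR) (use ch pr in auto)
      then have "- x = (- c) ^ p + (- hx)" using hx by simp
      then have "g (- x) = - c" using g_eq sub_neg[OF Hsub hx(1) ch pr] by blast
      moreover have "g x = c" using g_eq hx by blast
      ultimately show "g (- x) = - g x" by simp
    qed
    show "\<forall>b. \<forall>x\<in>G. g (b ^ p * x) = b * g x"
    proof (intro allI ballI)
      fix a x assume "x \<in> G"
      then obtain c hx where hx: "hx \<in> Hi" "x = c ^ p + hx" using Grep by blast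
      have "a ^ p * x = (a * c) ^ p + a ^ p * hx" using hx by (simp add: algebra_simps power_mult_distrib)
      then have "g (a ^ p * x) = a * c" using g_eq sub_smul[OF Hsub hx(1)] by blast
      moreover have "g x = c" using g_eq hx by blast
      ultimately show "g (a ^ p * x) = a * g x" by simp
    qed
    show "g 1 = 1"
    proof -
      have "(1::'a) = 1 ^ p + 0" by simp
      then show ?thesis using g_eq sub_zero[OF Hsub] by blast
    qed
    show "(0::real) < 2" by simp
    show "\<forall>x\<in>G. v (g x) ^ p \<le> 2 * v x"
    proof
      fix x assume "x \<in> G"
      then obtain c hx where hx: "hx \<in> Hi" "x = c ^ p + hx" using Grep by blast
      have gx: "g x = c" using g_eq hx by blast
      have m: "- hx \<in> Hi" by (rule sub_neg[OF Hsub hx(1) ch pr])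
      have "1/2 * v c ^ p \<le> v (c ^ p - - hx)"
        by (rule orthg_scaled[OF nv Hsub Horth _ p0 m]) simp
      then show "v (g x) ^ p \<le> 2 * v x" using hx gx by simp
    qed
    show "\<forall>x e. e > 0 \<longrightarrow> (\<exists>y\<in>G. v (x - y) < e)" by (rule dense)
  qed
  then show ?thesis by blast
qed


theorem mainTheorem6:
  fixes v :: "'a::field \<Rightarrow> real" and p :: nat
  assumes "nonarch_abs v" and "abs_complete v"
    and "CHAR('a) = p" and "p > 0"
    and "nontrivial_value_group v"
    and "spherically_complete v \<or> rp_dense_countable_basis v p \<or>
         (\<not> discrete_value_group v \<and> rp_polar v p)"
  shows "conv_ps_frobenius_split v p TYPE('n::finite)"
proof -
  have pr: "prime p" using prime_CHAR_semidom[where 'a='a] assms(3,4) by simp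
  have "\<exists>\<psi> K. good_psi v p \<psi> K"
    using assms(6) psi_sc[OF assms(1) _ assms(3) pr] psi_ctbl[OF assms(1,2,3) pr]
      psi_polar[OF assms(1) assms(5) assms(4)] by blast
  then obtain \<psi> K where "good_psi v p \<psi> K" by blast
  then show ?thesis by (rule split_from_psi[OF assms(1) pr assms(3)])
qed


end
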